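(* Fix $i\in\{1,\dots,\underline m\}$. Suppose $(A,B,K,\underline b,d,\underline D_{[i]},W_{[i]})$ with $\underline D_{[i]}\in\mathbb{D}_+^{\underline m}$, $W_{[i]}\in\mathbb{D}_+^{m_w}$ satisfies condition (RPI$_i$). Consider the LMI in the variables $(\mathbf A,\mathbf B,\mathbf d,\mathbf K,\underline{\mathbf b},\hat{\underline{\mathbf D}}_{[i]},\hat{\mathbf W}_{[i]})$: $$\begin{bmatrix} \mathbf I & \mathbf 0 & \mathbf 0 & -\mathbf B^\top\underline P_i^\top & \mathbf 0 & \mathbf K\\ * & \hat{\underline{\mathbf D}}_{[i]} & \mathbf 0 & \underline{\mathbf b} & \mathbf 0 & \mathbf 0\\ * & * & \hat{\mathbf W}_{[i]} & \mathbf d & \mathbf 0 & \mathbf 0\\ * & * & * & 2\underline{\mathbf b}_i+\mathcal{L}^{B^\top\underline P_i^\top,\mathbf I}_{\mathbf B^\top\underline P_i^\top,\mathbf I} & \underline P_i & \underline P_i\mathbf A\\ * & * & * & * & \mathcal{L}^{F,W_{[i]}^{-1}}_{F,\hat{\mathbf W}_{[i]}} & \mathbf 0\\ * & * & * & * & * & \mathcal{L}^{\underline P,\underline D_{[i]}^{-1}}_{\underline P,\hat{\underline{\mathbf D}}_{[i]}}+\mathcal{L}^{K,\mathbf I}_{\mathbf K,\mathbf I} \end{bmatrix}\succ0 .$$ Then (a) this LMI is satisfied by $(\mathbf A,\mathbf B,\mathbf d,\mathbf K,\underline{\mathbf b},\hat{\underline{\mathbf D}}_{[i]},\hat{\mathbf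 W}_{[i]})=(A,B,d,K,\underline b,\underline D_{[i]}^{-1},W_{[i]}^{-1})$; and (b) any solution with $\hat{\underline{\mathbf D}}_{[i]}\in\mathbb{D}_+^{\underline m}$, $\hat{\mathbf W}_{[i]}\in\mathbb{D}_+^{m_w}$ is such that $(\mathbf A,\mathbf B,\mathbf K,\underline{\mathbf b},\mathbf d,\hat{\underline{\mathbf D}}_{[i]}^{-1},\hat{\mathbf W}_{[i]}^{-1})$ satisfies condition (RPI$_i$).
   Context: Notation: $M_i$ is the $i$-th row of a matrix $M$, $b_i$ the $i$-th entry of a vector $b$; $\mathbb{D}_+^m$ is the set of $m\times m$ diagonal matrices with positive diagonal; $\succ0$ means symmetric positive definite; $*$ denotes symmetric blocks; $\mathbf I,\mathbf 0$ identity and zero blocks of appropriate size (the first diagonal $\mathbf I$ is $n_u\times n_u$). For matrices $\mathbf L,L\in\mathbb{R}^{m\times n}$ and symmetric invertible $\mathbf D,D\in\mathbb{R}^{m\times m}$, $\mathcal{L}^{L,D}_{\mathbf L,\mathbf D}:=\mathbf L^\top D^{-1}L+L^\top D^{-1}\mathbf L-L^\top D^{-1}\mathbf D D^{-1}L$. Fixed data: $\underline P\in\mathbb{R}^{\underline m\times n_x}$, $F\in\mathbb{R}^{m_w\times n_x}$. Variables: $A\in\mathbb{R}^{n_x\times n_x}$, $B\in\mathbb{R}^{n_x\times n_u}$, $K\in\mathbb{R}^{n_u\times n_x}$, $\underline b\in\mathbb{R}^{\underline m}$, $d\in\mathbb{R}^{m_w}$ (bold versions of the same sizes). Condition (RPI$_i$)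 for $(A,B,K,\underline b,d,\underline D_{[i]},W_{[i]})$: $$\begin{bmatrix}2\underline b_i-\underline b^\top\underline D_{[i]}\underline b-d^\top W_{[i]}d & \underline P_i & \underline P_i(A+BK)\\ * & F^\top W_{[i]}F & \mathbf 0\\ * & * & \underline P^\top\underline D_{[i]}\underline P\end{bmatrix}\succ0.$$ *)

theory Defs
  imports "Jordan_Normal_Form.Matrix"
begin

fun hcat :: "'a::zero mat list \<Rightarrow> 'a mat" where
  "hcat [] = 0\<^sub>m 0 0"
| "hcat [X] = X"
| "hcat (X # Xs) = four_block_mat X (hcat Xs) (0\<^sub>m 0 (dim_col X)) (0\<^sub>m 0 (dim_col (hcat Xs)))"

fun vcat :: "'a::zero mat list \<Rightarrow> 'a mat" where
  "vcat [] = 0\<^sub>m 0 0"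
| "vcat [X] = X"
| "vcat (X # Xs) = four_block_mat X (0\<^sub>m (dim_row X) 0) (vcat Xs) (0\<^sub>m (dim_row (vcat Xs)) 0)"

definition block_mat :: "'a::zero mat list list \<Rightarrow> 'a mat" where
  "block_mat Xss = vcat (map hcat Xss)"

definition col_of :: "'a vec \<Rightarrow> 'a mat" where
  "col_of v = transpose_mat (mat_of_row v)"

definition row_mat :: "'a mat \<Rightarrow> nat \<Rightarrow> 'a mat" where
  "row_mat M i = mat_of_row (row M i)"

definition scal_mat :: "'a \<Rightarrow> 'a mat" where
  "scal_mat c = mat 1 1 (\<lambda>_. c)"

definition pos_def :: "real mat \<Rightarrow> bool" where
  "pos_def M \<longleftrightarrow> M \<in> carrier_mat (dim_row M) (dim_row M) \<and> transpose_mat M = M \<and>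
     (\<forall>v \<in> carrier_vec (dim_row M). v \<noteq> 0\<^sub>v (dim_row M) \<longrightarrow> v \<bullet> (M *\<^sub>v v) > 0)"

definition diag_pos :: "nat \<Rightarrow> real mat set" where
  "diag_pos m = {D. D \<in> carrier_mat m m \<and> diagonal_mat D \<and> (\<forall>j<m. D $$ (j,j) > 0)}"

definition minv :: "real mat \<Rightarrow> real mat" where
  "minv D = (SOME E. E \<in> carrier_mat (dim_row D) (dim_row D) \<and>
                     D * E = 1\<^sub>m (dim_row D) \<and> E * D = 1\<^sub>m (dim_row D))"

text \<open>The operator L^{L,D}_{Lb,Db} = Lb^T D^-1 L + L^T D^-1 Lb - L^T D^-1 Db D^-1 L.\<close>
definition Lop :: "real mat \<Rightarrow> real mat \<Rightarrow> real mat \<Rightarrow> real mat \<Rightarrow> real mat" where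
  "Lop L D Lb Db = transpose_mat Lb * minv D * L + transpose_mat L * minv D * Lb
                   - transpose_mat L * minv D * Db * minv D * L"

text \<open>Condition (RPI_i) for (A,B,K,b,d,D,W), with fixed data P (m x nx), F (mw x nx).
  Row index i is 0-based.\<close>
definition RPI :: "nat \<Rightarrow> real mat \<Rightarrow> real mat \<Rightarrow> nat \<Rightarrow> real mat \<Rightarrow> real mat \<Rightarrow> real mat
                   \<Rightarrow> real vec \<Rightarrow> real vec \<Rightarrow> real mat \<Rightarrow> real mat \<Rightarrow> bool" where
  "RPI nx P F i A B K b d D W \<longleftrightarrow> pos_def (block_mat
    [[scal_mat (2 * b $ i) - transpose_mat (col_of b) * D * col_of b
        - transpose_mat (col_of d) * W * col_of d,
      row_mat P i, row_mat P i * (A + B * K)],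
     [transpose_mat (row_mat P i), transpose_mat F * W * F, 0\<^sub>m nx nx],
     [transpose_mat (row_mat P i * (A + B * K)), 0\<^sub>m nx nx, transpose_mat P * D * P]])"

text \<open>The LMI of the theorem in the bold variables (Ab,Bb,db,Kb,bb,Dh,Wh), linearized around
  the data (B,K,D,W).\<close>
definition LMI :: "nat \<Rightarrow> nat \<Rightarrow> nat \<Rightarrow> nat \<Rightarrow> real mat \<Rightarrow> real mat \<Rightarrow> nat
                   \<Rightarrow> real mat \<Rightarrow> real mat \<Rightarrow> real mat \<Rightarrow> real mat
                   \<Rightarrow> real mat \<Rightarrow> real mat \<Rightarrow> real vec \<Rightarrow> real mat \<Rightarrow> real vec \<Rightarrow> real mat \<Rightarrow> real mat
                   \<Rightarrow> bool" where
  "LMI nx nu m mw P F i B K D W Ab Bb db Kb bb Dh Wh \<longleftrightarrow>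
   (let Pi = row_mat P i;
        BPb = transpose_mat Bb * transpose_mat Pi;
        BP = transpose_mat B * transpose_mat Pi;
        X44 = scal_mat (2 * bb $ i) + Lop BP (1\<^sub>m nu) BPb (1\<^sub>m nu);
        X55 = Lop F (minv W) F Wh;
        X66 = Lop P (minv D) P Dh + Lop K (1\<^sub>m nu) Kb (1\<^sub>m nu)
    in pos_def (block_mat
    [[1\<^sub>m nu, 0\<^sub>m nu m, 0\<^sub>m nu mw, - BPb, 0\<^sub>m nu nx, Kb],
     [0\<^sub>m m nu, Dh, 0\<^sub>m m mw, col_of bb, 0\<^sub>m m nx, 0\<^sub>m m nx],
     [0\<^sub>m mw nu, 0\<^sub>m mw m, Wh, col_of db, 0\<^sub>m mw nx, 0\<^sub>m mw nx],
     [transpose_mat (- BPb), transpose_mat (col_of bb), transpose_mat (col_of db), X44, Pi, Pi * Ab],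
     [0\<^sub>m nx nu, 0\<^sub>m nx m, 0\<^sub>m nx mw, transpose_mat Pi, X55, 0\<^sub>m nx nx],
     [transpose_mat Kb, 0\<^sub>m nx m, 0\<^sub>m nx mw, transpose_mat (Pi * Ab), 0\<^sub>m nx nx, X66]]))"

end

theory Submission
  imports Defs
begin


lemma zero_mat_mult_vec[simp]: "dim_vec v = b \<Longrightarrow> 0\<^sub>m a b *\<^sub>v v = 0\<^sub>v a"
  by (intro eq_vecI, auto simp: scalar_prod_def)

lemma append_vec_dim0[simp]: "dim_vec w = 0 \<Longrightarrow> v @\<^sub>v w = v"
  by (intro eq_vecI, auto)

lemma add_zero_vec_dim[simp]: "dim_vec v = n \<Longrightarrow> v + 0\<^sub>v n = (v :: 'a :: monoid_add vec)"
  by (intro eq_vecI, auto)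


lemma hcat_dims[simp]: "dim_row (hcat (X#Y#Ys)) = dim_row X" "dim_col (hcat (X#Y#Ys)) = dim_col X + dim_col (hcat (Y#Ys))"
  by auto
lemma vcat_dims[simp]: "dim_row (vcat (X#Y#Ys)) = dim_row X + dim_row (vcat (Y#Ys))" "dim_col (vcat (X#Y#Ys)) = dim_col X"
  by auto
lemma hcat_mult:
  assumes "dim_row (hcat (Y#Ys)) = dim_row X" "dim_vec x = dim_col X" "dim_vec w = dim_col (hcat (Y#Ys))"
  shows "hcat (X#Y#Ys) *\<^sub>v (x @\<^sub>v w) = X *\<^sub>v x + hcat (Y#Ys) *\<^sub>v w"
proof -
  let ?H = "hcat (Y#Ys)"
  have "four_block_mat X ?H (0\<^sub>m 0 (dim_col X)) (0\<^sub>m 0 (dim_col ?H)) *\<^sub>v (x @\<^sub>v w) = (X *\<^sub>v x + ?H *\<^sub>v w) @\<^sub>v (0\<^sub>m 0 (dim_col X) *\<^sub>v x + 0\<^sub>m 0 (dim_col ?H) *\<^sub>v w)"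
    apply (rule four_block_mat_mult_vec[of X "dim_row X" "dim_col X" ?H "dim_col ?H" _ 0])
    using assms by (auto intro!: carrier_matI carrier_vecI)
  then show ?thesis using assms by simp
qed

lemma vcat_mult:
  assumes "dim_col (vcat (Y#Ys)) = dim_col X" "dim_vec v = dim_col X"
  shows "vcat (X#Y#Ys) *\<^sub>v v = (X *\<^sub>v v) @\<^sub>v (vcat (Y#Ys) *\<^sub>v v)"
proof -
  let ?e = "vec 0 (\<lambda>_. 0::'a)"
  let ?V = "vcat (Y#Ys)"
  have v: "v = v @\<^sub>v ?e" by simp
  have "four_block_mat X (0\<^sub>m (dim_row X) 0) ?V (0\<^sub>m (dim_row ?V) 0) *\<^sub>v (v @\<^sub>v ?e) = (X *\<^sub>v v + 0\<^sub>m (dim_row X) 0 *\<^sub>v ?e) @\<^sub>v (?V *\<^sub>v v + 0\<^sub>m (dim_row ?V) 0 *\<^sub>v ?e)"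
    apply (rule four_block_mat_mult_vec[of X "dim_row X" "dim_col X" _ 0 ?V "dim_row ?V"])
    using assms by (auto intro!: carrier_matI carrier_vecI)
  then show ?thesis using assms v by simp
qed


lemma sprod_append[simp]: "dim_vec v1 = dim_vec w1 \<Longrightarrow> dim_vec v2 = dim_vec w2 \<Longrightarrow> ((v1::real vec) @\<^sub>v v2) \<bullet> (w1 @\<^sub>v w2) = v1 \<bullet> w1 + v2 \<bullet> w2"
  by (rule scalar_prod_append, auto intro: carrier_vecI)
lemma sprod_add_r[simp]: "dim_vec v2 = dim_vec v1 \<Longrightarrow> dim_vec v3 = dim_vec v1 \<Longrightarrow> (v1::real vec) \<bullet> (v2 + v3) = v1 \<bullet> v2 + v1 \<bullet> v3"
  by (rule scalar_prod_add_distrib[of _ "dim_vec v1"], auto intro: carrier_vecI)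
lemma b3_bilin:
  fixes X11 X12 X13 X21 X22 X23 X31 X32 X33 :: "real mat"
  assumes "X11 \<in> carrier_mat n1 n1" and "X12 \<in> carrier_mat n1 n2" and "X13 \<in> carrier_mat n1 n3" and "X21 \<in> carrier_mat n2 n1" and "X22 \<in> carrier_mat n2 n2" and "X23 \<in> carrier_mat n2 n3" and "X31 \<in> carrier_mat n3 n1" and "X32 \<in> carrier_mat n3 n2" and "X33 \<in> carrier_mat n3 n3"
  and "x1 \<in> carrier_vec n1" and "x2 \<in> carrier_vec n2" and "x3 \<in> carrier_vec n3" and "u1 \<in> carrier_vec n1" and "u2 \<in> carrier_vec n2" and "u3 \<in> carrier_vec n3"
  shows "(u1 @\<^sub>v u2 @\<^sub>v u3) \<bullet> (block_mat [[X11, X12, X13], [X21, X22, X23], [X31, X32, X33]] *\<^sub>v (x1 @\<^sub>v x2 @\<^sub>v x3)) =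
    u1 \<bullet> (X11 *\<^sub>v x1) + u1 \<bullet> (X12 *\<^sub>v x2) + u1 \<bullet> (X13 *\<^sub>v x3) + u2 \<bullet> (X21 *\<^sub>v x1) + u2 \<bullet> (X22 *\<^sub>v x2) + u2 \<bullet> (X23 *\<^sub>v x3) + u3 \<bullet> (X31 *\<^sub>v x1) + u3 \<bullet> (X32 *\<^sub>v x2) + u3 \<bullet> (X33 *\<^sub>v x3)"
  using assms by (simp del: hcat.simps vcat.simps add: hcat.simps(2) vcat.simps(2) block_mat_def hcat_mult vcat_mult scalar_prod_append carrier_matD carrier_vecD)

lemma b3_carrier:
  fixes X11 X12 X13 X21 X22 X23 X31 X32 X33 :: "real mat"
  assumes "X11 \<in> carrier_mat n1 n1" and "X12 \<in> carrier_mat n1 n2" and "X13 \<in> carrier_mat n1 n3" and "X21 \<in> carrier_mat n2 n1" and "X22 \<in> carrier_mat n2 n2" and "X23 \<in> carrier_mat n2 n3" and "X31 \<in> carrier_mat n3 n1" and "X32 \<in> carrier_mat n3 n2" and "X33 \<in> carrier_mat n3 n3"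
  shows "block_mat [[X11, X12, X13], [X21, X22, X23], [X31, X32, X33]] \<in> carrier_mat (n1+n2+n3) (n1+n2+n3)"
  using assms by (intro carrier_matI) (simp_all del: hcat.simps vcat.simps add: hcat.simps(2) vcat.simps(2) block_mat_def carrier_matD)


lemma b6_bilin:
  fixes X11 X12 X13 X14 X15 X16 X21 X22 X23 X24 X25 X26 X31 X32 X33 X34 X35 X36 X41 X42 X43 X44 X45 X46 X51 X52 X53 X54 X55 X56 X61 X62 X63 X64 X65 X66 :: "real mat"
  assumes "X11 \<in> carrier_mat n1 n1" and "X12 \<in> carrier_mat n1 n2" and "X13 \<in> carrier_mat n1 n3" and "X14 \<in> carrier_mat n1 n4" and "X15 \<in> carrier_mat n1 n5" and "X16 \<in> carrier_mat n1 n6" and "X21 \<in> carrier_mat n2 n1" and "X22 \<in> carrier_mat n2 n2" and "X23 \<in> carrier_mat n2 n3" and "X24 \<in> carrier_mat n2 n4" and "X25 \<in> carrier_mat n2 n5" and "X26 \<in> carrier_mat n2 n6" and "X31 \<in> carrier_mat n3 n1" and "X32 \<in> carrier_mat n3 n2" and "X33 \<in> carrier_mat n3 n3" and "X34 \<in> carrier_mat n3 n4" and "X35 \<in> carrier_mat n3 n5" and "X36 \<in> carrier_mat n3 n6" and "X41 \<in> carrier_mat n4 n1" and "X42 \<in> carrier_mat n4 n2" and "X43 \<in> carrier_mat n4 n3" and "X44 \<in> carrier_mat n4 n4" and "X45 \<in> carrier_mat n4 n5" and "X46 \<in> carrier_mat n4 n6" and "X51 \<in> carrier_mat n5 n1"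 and "X52 \<in> carrier_mat n5 n2" and "X53 \<in> carrier_mat n5 n3" and "X54 \<in> carrier_mat n5 n4" and "X55 \<in> carrier_mat n5 n5" and "X56 \<in> carrier_mat n5 n6" and "X61 \<in> carrier_mat n6 n1" and "X62 \<in> carrier_mat n6 n2" and "X63 \<in> carrier_mat n6 n3" and "X64 \<in> carrier_mat n6 n4" and "X65 \<in> carrier_mat n6 n5" and "X66 \<in> carrier_mat n6 n6"
  and "x1 \<in> carrier_vec n1" and "x2 \<in> carrier_vec n2" and "x3 \<in> carrier_vec n3" and "x4 \<in> carrier_vec n4" and "x5 \<in> carrier_vec n5" and "x6 \<in> carrier_vec n6" and "u1 \<in> carrier_vec n1" and "u2 \<in> carrier_vec n2" and "u3 \<in> carrier_vec n3" and "u4 \<in> carrier_vec n4" and "u5 \<in> carrier_vec n5" and "u6 \<in> carrier_vec n6"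
  shows "(u1 @\<^sub>v u2 @\<^sub>v u3 @\<^sub>v u4 @\<^sub>v u5 @\<^sub>v u6) \<bullet> (block_mat [[X11, X12, X13, X14, X15, X16], [X21, X22, X23, X24, X25, X26], [X31, X32, X33, X34, X35, X36], [X41, X42, X43, X44, X45, X46], [X51, X52, X53, X54, X55, X56], [X61, X62, X63, X64, X65, X66]] *\<^sub>v (x1 @\<^sub>v x2 @\<^sub>v x3 @\<^sub>v x4 @\<^sub>v x5 @\<^sub>v x6)) =
    u1 \<bullet> (X11 *\<^sub>v x1) + u1 \<bullet> (X12 *\<^sub>v x2) + u1 \<bullet> (X13 *\<^sub>v x3) + u1 \<bullet> (X14 *\<^sub>v x4) + u1 \<bullet> (X15 *\<^sub>v x5) + u1 \<bullet> (X16 *\<^sub>v x6) + u2 \<bullet> (X21 *\<^sub>v x1) + u2 \<bullet> (X22 *\<^sub>v x2) + u2 \<bullet> (X23 *\<^sub>v x3) + u2 \<bullet> (X24 *\<^sub>v x4) + u2 \<bullet> (X25 *\<^sub>v x5) + u2 \<bullet> (X26 *\<^sub>v x6) + u3 \<bullet> (X31 *\<^sub>v x1) + u3 \<bullet> (X32 *\<^sub>v x2) + u3 \<bullet> (X33 *\<^sub>v x3) + u3 \<bullet> (X34 *\<^sub>v x4) + u3 \<bullet> (X35 *\<^sub>v x5) + u3 \<bullet> (X36 *\<^sub>v x6) + u4 \<bullet> (X41 *\<^sub>v x1) + u4 \<bullet> (X42 *\<^sub>v x2) + u4 \<bullet> (X43 *\<^sub>v x3) + u4 \<bullet> (X44 *\<^sub>v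 x4) + u4 \<bullet> (X45 *\<^sub>v x5) + u4 \<bullet> (X46 *\<^sub>v x6) + u5 \<bullet> (X51 *\<^sub>v x1) + u5 \<bullet> (X52 *\<^sub>v x2) + u5 \<bullet> (X53 *\<^sub>v x3) + u5 \<bullet> (X54 *\<^sub>v x4) + u5 \<bullet> (X55 *\<^sub>v x5) + u5 \<bullet> (X56 *\<^sub>v x6) + u6 \<bullet> (X61 *\<^sub>v x1) + u6 \<bullet> (X62 *\<^sub>v x2) + u6 \<bullet> (X63 *\<^sub>v x3) + u6 \<bullet> (X64 *\<^sub>v x4) + u6 \<bullet> (X65 *\<^sub>v x5) + u6 \<bullet> (X66 *\<^sub>v x6)"
  using assms by (simp del: hcat.simps vcat.simps add: hcat.simps(2) vcat.simps(2) block_mat_def hcat_mult vcat_mult scalar_prod_append carrier_matD carrier_vecD)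

lemma b6_carrier:
  fixes X11 X12 X13 X14 X15 X16 X21 X22 X23 X24 X25 X26 X31 X32 X33 X34 X35 X36 X41 X42 X43 X44 X45 X46 X51 X52 X53 X54 X55 X56 X61 X62 X63 X64 X65 X66 :: "real mat"
  assumes "X11 \<in> carrier_mat n1 n1" and "X12 \<in> carrier_mat n1 n2" and "X13 \<in> carrier_mat n1 n3" and "X14 \<in> carrier_mat n1 n4" and "X15 \<in> carrier_mat n1 n5" and "X16 \<in> carrier_mat n1 n6" and "X21 \<in> carrier_mat n2 n1" and "X22 \<in> carrier_mat n2 n2" and "X23 \<in> carrier_mat n2 n3" and "X24 \<in> carrier_mat n2 n4" and "X25 \<in> carrier_mat n2 n5" and "X26 \<in> carrier_mat n2 n6" and "X31 \<in> carrier_mat n3 n1" and "X32 \<in> carrier_mat n3 n2" and "X33 \<in> carrier_mat n3 n3" and "X34 \<in> carrier_mat n3 n4" and "X35 \<in> carrier_mat n3 n5" and "X36 \<in> carrier_mat n3 n6" and "X41 \<in> carrier_mat n4 n1" and "X42 \<in> carrier_mat n4 n2" and "X43 \<in> carrier_mat n4 n3" and "X44 \<in> carrier_mat n4 n4" and "X45 \<in> carrier_mat n4 n5" and "X46 \<in> carrier_mat n4 n6" and "X51 \<in> carrier_mat n5 n1" and "X52 \<in> carrier_mat n5 n2" and "X53 \<in> carrier_mat n5 n3" and "X54 \<in> carrier_mat n5 n4" and "X55 \<in> carrier_mat n5 n5" and "X56 \<in> carrier_mat n5 n6" and "X61 \<in> carrier_mat n6 n1" and "X62 \<in> carrier_mat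 n6 n2" and "X63 \<in> carrier_mat n6 n3" and "X64 \<in> carrier_mat n6 n4" and "X65 \<in> carrier_mat n6 n5" and "X66 \<in> carrier_mat n6 n6"
  shows "block_mat [[X11, X12, X13, X14, X15, X16], [X21, X22, X23, X24, X25, X26], [X31, X32, X33, X34, X35, X36], [X41, X42, X43, X44, X45, X46], [X51, X52, X53, X54, X55, X56], [X61, X62, X63, X64, X65, X66]] \<in> carrier_mat (n1+n2+n3+n4+n5+n6) (n1+n2+n3+n4+n5+n6)"
  using assms by (intro carrier_matI) (simp_all del: hcat.simps vcat.simps add: hcat.simps(2) vcat.simps(2) block_mat_def carrier_matD)





lemma sym_by_bilin:
  assumes M: "(M::real mat) \<in> carrier_mat n n"
  and h: "\<forall>u v. u \<in> carrier_vec n \<longrightarrow> v \<in> carrier_vec n \<longrightarrow> u \<bullet> (M *\<^sub>v v) = v \<bullet> (M *\<^sub>v u)"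
  shows "transpose_mat M = M"
proof (rule eq_matI)
  fix i j assume i: "i < dim_row M" and j: "j < dim_col M"
  have ent: "unit_vec n a \<bullet> (M *\<^sub>v unit_vec n b) = M $$ (a,b)" if a: "a < n" and b: "b < n" for a b
  proof -
    have "unit_vec n a \<bullet> (M *\<^sub>v unit_vec n b) = (M *\<^sub>v unit_vec n b) $ a"
      using a M by (intro scalar_prod_left_unit) auto
    also have "\<dots> = row M a \<bullet> unit_vec n b" using a M by auto
    also have "\<dots> = row M a $ b" using b M by (intro scalar_prod_right_unit) auto
    finally show ?thesis using a b M by auto
  qed
  have "M $$ (i,j) = M $$ (j,i)"
    using ent[of i j] ent[of j i] h i j M by auto
  then show "transpose_mat M $$ (i,j) = M $$ (i,j)" using i j M by auto
qed (use assms in auto)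

lemma split_vec: assumes "v \<in> carrier_vec (a+b)"
  shows "\<exists>x y. x \<in> carrier_vec a \<and> y \<in> carrier_vec b \<and> v = x @\<^sub>v y"
  using vec_first_last_append[OF assms] vec_first_carrier vec_last_carrier by metis

lemma tr_sprod: "(X::real mat) \<in> carrier_mat a b \<Longrightarrow> u \<in> carrier_vec a \<Longrightarrow> v \<in> carrier_vec b \<Longrightarrow> Y = transpose_mat X \<Longrightarrow>
  u \<bullet> (X *\<^sub>v v) = v \<bullet> (Y *\<^sub>v u)"
  using transpose_vec_mult_scalar[of X a b v u] comm_scalar_prod[of "transpose_mat X *\<^sub>v u" b v] by auto

lemma split3: assumes "v \<in> carrier_vec (n1+(n2+(n3)))"
  shows "\<exists>x1 x2 x3. x1 \<in> carrier_vec n1 \<and> x2 \<in> carrier_vec n2 \<and> x3 \<in> carrier_vec n3 \<and> v = x1 @\<^sub>v x2 @\<^sub>v x3"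
proof -
  obtain x1 r1 where h1: "x1 \<in> carrier_vec n1" "r1 \<in> carrier_vec (n2+(n3))" "v = x1 @\<^sub>v r1"
    using split_vec[OF assms] by blast
  obtain x2 r2 where h2: "x2 \<in> carrier_vec n2" "r2 \<in> carrier_vec (n3)" "r1 = x2 @\<^sub>v r2"
    using split_vec[OF h1(2)] by blast
  show ?thesis using h1 h2 by blast
qed

lemma b3_sym:
  fixes X11 X12 X13 X21 X22 X23 X31 X32 X33 :: "real mat"
  assumes c: "X11 \<in> carrier_mat n1 n1" "X12 \<in> carrier_mat n1 n2" "X13 \<in> carrier_mat n1 n3" "X21 \<in> carrier_mat n2 n1" "X22 \<in> carrier_mat n2 n2" "X23 \<in> carrier_mat n2 n3" "X31 \<in> carrier_mat n3 n1" "X32 \<in> carrier_mat n3 n2" "X33 \<in> carrier_mat n3 n3"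
  and s: "X21 = transpose_mat X12" "X31 = transpose_mat X13" "X32 = transpose_mat X23" and d: "transpose_mat X11 = X11" "transpose_mat X22 = X22" "transpose_mat X33 = X33"
  shows "transpose_mat (block_mat [[X11, X12, X13], [X21, X22, X23], [X31, X32, X33]]) = block_mat [[X11, X12, X13], [X21, X22, X23], [X31, X32, X33]]"
proof (rule sym_by_bilin[OF b3_carrier[OF c]], intro allI impI)
  fix u v :: "real vec" assume u: "u \<in> carrier_vec (n1+n2+n3)" and v: "v \<in> carrier_vec (n1+n2+n3)"
  have u': "u \<in> carrier_vec (n1+(n2+(n3)))" using u by (simp add: ac_simps)
  have v': "v \<in> carrier_vec (n1+(n2+(n3)))" using v by (simp add: ac_simps)
  obtain u1 u2 u3 where hu: "u1 \<in> carrier_vec n1" "u2 \<in> carrier_vec n2" "u3 \<in> carrier_vec n3" "u = u1 @\<^sub>v u2 @\<^sub>v u3" using split3[OF u'] by blast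
  obtain v1 v2 v3 where hv: "v1 \<in> carrier_vec n1" "v2 \<in> carrier_vec n2" "v3 \<in> carrier_vec n3" "v = v1 @\<^sub>v v2 @\<^sub>v v3" using split3[OF v'] by blast
  have h11: "u1 \<bullet> (X11 *\<^sub>v v1) = v1 \<bullet> (X11 *\<^sub>v u1)"
    by (rule tr_sprod[of _ n1 n1], insert c hu hv, auto simp: s d)
  have h12: "u1 \<bullet> (X12 *\<^sub>v v2) = v2 \<bullet> (X21 *\<^sub>v u1)"
    by (rule tr_sprod[of _ n1 n2], insert c hu hv, auto simp: s)
  have h13: "u1 \<bullet> (X13 *\<^sub>v v3) = v3 \<bullet> (X31 *\<^sub>v u1)"
    by (rule tr_sprod[of _ n1 n3], insert c hu hv, auto simp: s)
  have h21: "u2 \<bullet> (X21 *\<^sub>v v1) = v1 \<bullet> (X12 *\<^sub>v u2)"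
    by (rule tr_sprod[of _ n2 n1], insert c hu hv, auto simp: s d)
  have h22: "u2 \<bullet> (X22 *\<^sub>v v2) = v2 \<bullet> (X22 *\<^sub>v u2)"
    by (rule tr_sprod[of _ n2 n2], insert c hu hv, auto simp: s d)
  have h23: "u2 \<bullet> (X23 *\<^sub>v v3) = v3 \<bullet> (X32 *\<^sub>v u2)"
    by (rule tr_sprod[of _ n2 n3], insert c hu hv, auto simp: s)
  have h31: "u3 \<bullet> (X31 *\<^sub>v v1) = v1 \<bullet> (X13 *\<^sub>v u3)"
    by (rule tr_sprod[of _ n3 n1], insert c hu hv, auto simp: s d)
  have h32: "u3 \<bullet> (X32 *\<^sub>v v2) = v2 \<bullet> (X23 *\<^sub>v u3)"
    by (rule tr_sprod[of _ n3 n2], insert c hu hv, auto simp: s d)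
  have h33: "u3 \<bullet> (X33 *\<^sub>v v3) = v3 \<bullet> (X33 *\<^sub>v u3)"
    by (rule tr_sprod[of _ n3 n3], insert c hu hv, auto simp: s d)
  show "u \<bullet> (block_mat [[X11, X12, X13], [X21, X22, X23], [X31, X32, X33]] *\<^sub>v v) = v \<bullet> (block_mat [[X11, X12, X13], [X21, X22, X23], [X31, X32, X33]] *\<^sub>v u)"
    unfolding hu(4) hv(4) b3_bilin[OF c hv(1-3) hu(1-3)] b3_bilin[OF c hu(1-3) hv(1-3)]
    using h11 h12 h13 h21 h22 h23 h31 h32 h33 by linarith
qed


lemma split6: assumes "v \<in> carrier_vec (n1+(n2+(n3+(n4+(n5+(n6))))))"
  shows "\<exists>x1 x2 x3 x4 x5 x6. x1 \<in> carrier_vec n1 \<and> x2 \<in> carrier_vec n2 \<and> x3 \<in> carrier_vec n3 \<and> x4 \<in> carrier_vec n4 \<and> x5 \<in> carrier_vec n5 \<and> x6 \<in> carrier_vec n6 \<and> v = x1 @\<^sub>v x2 @\<^sub>v x3 @\<^sub>v x4 @\<^sub>v x5 @\<^sub>v x6"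
proof -
  obtain x1 r1 where h1: "x1 \<in> carrier_vec n1" "r1 \<in> carrier_vec (n2+(n3+(n4+(n5+(n6)))))" "v = x1 @\<^sub>v r1"
    using split_vec[OF assms] by blast
  obtain x2 r2 where h2: "x2 \<in> carrier_vec n2" "r2 \<in> carrier_vec (n3+(n4+(n5+(n6))))" "r1 = x2 @\<^sub>v r2"
    using split_vec[OF h1(2)] by blast
  obtain x3 r3 where h3: "x3 \<in> carrier_vec n3" "r3 \<in> carrier_vec (n4+(n5+(n6)))" "r2 = x3 @\<^sub>v r3"
    using split_vec[OF h2(2)] by blast
  obtain x4 r4 where h4: "x4 \<in> carrier_vec n4" "r4 \<in> carrier_vec (n5+(n6))" "r3 = x4 @\<^sub>v r4"
    using split_vec[OF h3(2)] by blast
  obtain x5 r5 where h5: "x5 \<in> carrier_vec n5" "r5 \<in> carrier_vec (n6)" "r4 = x5 @\<^sub>v r5"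
    using split_vec[OF h4(2)] by blast
  show ?thesis using h1 h2 h3 h4 h5 by blast
qed

lemma b6_sym:
  fixes X11 X12 X13 X14 X15 X16 X21 X22 X23 X24 X25 X26 X31 X32 X33 X34 X35 X36 X41 X42 X43 X44 X45 X46 X51 X52 X53 X54 X55 X56 X61 X62 X63 X64 X65 X66 :: "real mat"
  assumes c: "X11 \<in> carrier_mat n1 n1" "X12 \<in> carrier_mat n1 n2" "X13 \<in> carrier_mat n1 n3" "X14 \<in> carrier_mat n1 n4" "X15 \<in> carrier_mat n1 n5" "X16 \<in> carrier_mat n1 n6" "X21 \<in> carrier_mat n2 n1" "X22 \<in> carrier_mat n2 n2" "X23 \<in> carrier_mat n2 n3" "X24 \<in> carrier_mat n2 n4" "X25 \<in> carrier_mat n2 n5" "X26 \<in> carrier_mat n2 n6" "X31 \<in> carrier_mat n3 n1" "X32 \<in> carrier_mat n3 n2" "X33 \<in> carrier_mat n3 n3" "X34 \<in> carrier_mat n3 n4" "X35 \<in> carrier_mat n3 n5" "X36 \<in> carrier_mat n3 n6" "X41 \<in> carrier_mat n4 n1" "X42 \<in> carrier_mat n4 n2" "X43 \<in> carrier_mat n4 n3" "X44 \<in> carrier_mat n4 n4" "X45 \<in> carrier_mat n4 n5" "X46 \<in> carrier_mat n4 n6" "X51 \<in> carrier_mat n5 n1" "X52 \<in> carrier_mat n5 n2" "X53 \<in> carrier_mat n5 n3" "X54 \<in> carrier_mat n5 n4" "X55 \<in> carrier_mat n5 n5" "X56 \<in> carrier_mat n5 n6" "X61 \<in> carrier_mat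 n6 n1" "X62 \<in> carrier_mat n6 n2" "X63 \<in> carrier_mat n6 n3" "X64 \<in> carrier_mat n6 n4" "X65 \<in> carrier_mat n6 n5" "X66 \<in> carrier_mat n6 n6"
  and s: "X21 = transpose_mat X12" "X31 = transpose_mat X13" "X41 = transpose_mat X14" "X51 = transpose_mat X15" "X61 = transpose_mat X16" "X32 = transpose_mat X23" "X42 = transpose_mat X24" "X52 = transpose_mat X25" "X62 = transpose_mat X26" "X43 = transpose_mat X34" "X53 = transpose_mat X35" "X63 = transpose_mat X36" "X54 = transpose_mat X45" "X64 = transpose_mat X46" "X65 = transpose_mat X56" and d: "transpose_mat X11 = X11" "transpose_mat X22 = X22" "transpose_mat X33 = X33" "transpose_mat X44 = X44" "transpose_mat X55 = X55" "transpose_mat X66 = X66"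
  shows "transpose_mat (block_mat [[X11, X12, X13, X14, X15, X16], [X21, X22, X23, X24, X25, X26], [X31, X32, X33, X34, X35, X36], [X41, X42, X43, X44, X45, X46], [X51, X52, X53, X54, X55, X56], [X61, X62, X63, X64, X65, X66]]) = block_mat [[X11, X12, X13, X14, X15, X16], [X21, X22, X23, X24, X25, X26], [X31, X32, X33, X34, X35, X36], [X41, X42, X43, X44, X45, X46], [X51, X52, X53, X54, X55, X56], [X61, X62, X63, X64, X65, X66]]"
proof (rule sym_by_bilin[OF b6_carrier[OF c]], intro allI impI)
  fix u v :: "real vec" assume u: "u \<in> carrier_vec (n1+n2+n3+n4+n5+n6)" and v: "v \<in> carrier_vec (n1+n2+n3+n4+n5+n6)"
  have u': "u \<in> carrier_vec (n1+(n2+(n3+(n4+(n5+(n6))))))" using u by (simp add: ac_simps)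
  have v': "v \<in> carrier_vec (n1+(n2+(n3+(n4+(n5+(n6))))))" using v by (simp add: ac_simps)
  obtain u1 u2 u3 u4 u5 u6 where hu: "u1 \<in> carrier_vec n1" "u2 \<in> carrier_vec n2" "u3 \<in> carrier_vec n3" "u4 \<in> carrier_vec n4" "u5 \<in> carrier_vec n5" "u6 \<in> carrier_vec n6" "u = u1 @\<^sub>v u2 @\<^sub>v u3 @\<^sub>v u4 @\<^sub>v u5 @\<^sub>v u6" using split6[OF u'] by blast
  obtain v1 v2 v3 v4 v5 v6 where hv: "v1 \<in> carrier_vec n1" "v2 \<in> carrier_vec n2" "v3 \<in> carrier_vec n3" "v4 \<in> carrier_vec n4" "v5 \<in> carrier_vec n5" "v6 \<in> carrier_vec n6" "v = v1 @\<^sub>v v2 @\<^sub>v v3 @\<^sub>v v4 @\<^sub>v v5 @\<^sub>v v6" using split6[OF v'] by blast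
  have h11: "u1 \<bullet> (X11 *\<^sub>v v1) = v1 \<bullet> (X11 *\<^sub>v u1)"
    by (rule tr_sprod[of _ n1 n1], insert c hu hv, auto simp: s d)
  have h12: "u1 \<bullet> (X12 *\<^sub>v v2) = v2 \<bullet> (X21 *\<^sub>v u1)"
    by (rule tr_sprod[of _ n1 n2], insert c hu hv, auto simp: s)
  have h13: "u1 \<bullet> (X13 *\<^sub>v v3) = v3 \<bullet> (X31 *\<^sub>v u1)"
    by (rule tr_sprod[of _ n1 n3], insert c hu hv, auto simp: s)
  have h14: "u1 \<bullet> (X14 *\<^sub>v v4) = v4 \<bullet> (X41 *\<^sub>v u1)"
    by (rule tr_sprod[of _ n1 n4], insert c hu hv, auto simp: s)
  have h15: "u1 \<bullet> (X15 *\<^sub>v v5) = v5 \<bullet> (X51 *\<^sub>v u1)"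
    by (rule tr_sprod[of _ n1 n5], insert c hu hv, auto simp: s)
  have h16: "u1 \<bullet> (X16 *\<^sub>v v6) = v6 \<bullet> (X61 *\<^sub>v u1)"
    by (rule tr_sprod[of _ n1 n6], insert c hu hv, auto simp: s)
  have h21: "u2 \<bullet> (X21 *\<^sub>v v1) = v1 \<bullet> (X12 *\<^sub>v u2)"
    by (rule tr_sprod[of _ n2 n1], insert c hu hv, auto simp: s d)
  have h22: "u2 \<bullet> (X22 *\<^sub>v v2) = v2 \<bullet> (X22 *\<^sub>v u2)"
    by (rule tr_sprod[of _ n2 n2], insert c hu hv, auto simp: s d)
  have h23: "u2 \<bullet> (X23 *\<^sub>v v3) = v3 \<bullet> (X32 *\<^sub>v u2)"
    by (rule tr_sprod[of _ n2 n3], insert c hu hv, auto simp: s)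
  have h24: "u2 \<bullet> (X24 *\<^sub>v v4) = v4 \<bullet> (X42 *\<^sub>v u2)"
    by (rule tr_sprod[of _ n2 n4], insert c hu hv, auto simp: s)
  have h25: "u2 \<bullet> (X25 *\<^sub>v v5) = v5 \<bullet> (X52 *\<^sub>v u2)"
    by (rule tr_sprod[of _ n2 n5], insert c hu hv, auto simp: s)
  have h26: "u2 \<bullet> (X26 *\<^sub>v v6) = v6 \<bullet> (X62 *\<^sub>v u2)"
    by (rule tr_sprod[of _ n2 n6], insert c hu hv, auto simp: s)
  have h31: "u3 \<bullet> (X31 *\<^sub>v v1) = v1 \<bullet> (X13 *\<^sub>v u3)"
    by (rule tr_sprod[of _ n3 n1], insert c hu hv, auto simp: s d)
  have h32: "u3 \<bullet> (X32 *\<^sub>v v2) = v2 \<bullet> (X23 *\<^sub>v u3)"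
    by (rule tr_sprod[of _ n3 n2], insert c hu hv, auto simp: s d)
  have h33: "u3 \<bullet> (X33 *\<^sub>v v3) = v3 \<bullet> (X33 *\<^sub>v u3)"
    by (rule tr_sprod[of _ n3 n3], insert c hu hv, auto simp: s d)
  have h34: "u3 \<bullet> (X34 *\<^sub>v v4) = v4 \<bullet> (X43 *\<^sub>v u3)"
    by (rule tr_sprod[of _ n3 n4], insert c hu hv, auto simp: s)
  have h35: "u3 \<bullet> (X35 *\<^sub>v v5) = v5 \<bullet> (X53 *\<^sub>v u3)"
    by (rule tr_sprod[of _ n3 n5], insert c hu hv, auto simp: s)
  have h36: "u3 \<bullet> (X36 *\<^sub>v v6) = v6 \<bullet> (X63 *\<^sub>v u3)"
    by (rule tr_sprod[of _ n3 n6], insert c hu hv, auto simp: s)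
  have h41: "u4 \<bullet> (X41 *\<^sub>v v1) = v1 \<bullet> (X14 *\<^sub>v u4)"
    by (rule tr_sprod[of _ n4 n1], insert c hu hv, auto simp: s d)
  have h42: "u4 \<bullet> (X42 *\<^sub>v v2) = v2 \<bullet> (X24 *\<^sub>v u4)"
    by (rule tr_sprod[of _ n4 n2], insert c hu hv, auto simp: s d)
  have h43: "u4 \<bullet> (X43 *\<^sub>v v3) = v3 \<bullet> (X34 *\<^sub>v u4)"
    by (rule tr_sprod[of _ n4 n3], insert c hu hv, auto simp: s d)
  have h44: "u4 \<bullet> (X44 *\<^sub>v v4) = v4 \<bullet> (X44 *\<^sub>v u4)"
    by (rule tr_sprod[of _ n4 n4], insert c hu hv, auto simp: s d)
  have h45: "u4 \<bullet> (X45 *\<^sub>v v5) = v5 \<bullet> (X54 *\<^sub>v u4)"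
    by (rule tr_sprod[of _ n4 n5], insert c hu hv, auto simp: s)
  have h46: "u4 \<bullet> (X46 *\<^sub>v v6) = v6 \<bullet> (X64 *\<^sub>v u4)"
    by (rule tr_sprod[of _ n4 n6], insert c hu hv, auto simp: s)
  have h51: "u5 \<bullet> (X51 *\<^sub>v v1) = v1 \<bullet> (X15 *\<^sub>v u5)"
    by (rule tr_sprod[of _ n5 n1], insert c hu hv, auto simp: s d)
  have h52: "u5 \<bullet> (X52 *\<^sub>v v2) = v2 \<bullet> (X25 *\<^sub>v u5)"
    by (rule tr_sprod[of _ n5 n2], insert c hu hv, auto simp: s d)
  have h53: "u5 \<bullet> (X53 *\<^sub>v v3) = v3 \<bullet> (X35 *\<^sub>v u5)"
    by (rule tr_sprod[of _ n5 n3], insert c hu hv, auto simp: s d)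
  have h54: "u5 \<bullet> (X54 *\<^sub>v v4) = v4 \<bullet> (X45 *\<^sub>v u5)"
    by (rule tr_sprod[of _ n5 n4], insert c hu hv, auto simp: s d)
  have h55: "u5 \<bullet> (X55 *\<^sub>v v5) = v5 \<bullet> (X55 *\<^sub>v u5)"
    by (rule tr_sprod[of _ n5 n5], insert c hu hv, auto simp: s d)
  have h56: "u5 \<bullet> (X56 *\<^sub>v v6) = v6 \<bullet> (X65 *\<^sub>v u5)"
    by (rule tr_sprod[of _ n5 n6], insert c hu hv, auto simp: s)
  have h61: "u6 \<bullet> (X61 *\<^sub>v v1) = v1 \<bullet> (X16 *\<^sub>v u6)"
    by (rule tr_sprod[of _ n6 n1], insert c hu hv, auto simp: s d)
  have h62: "u6 \<bullet> (X62 *\<^sub>v v2) = v2 \<bullet> (X26 *\<^sub>v u6)"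
    by (rule tr_sprod[of _ n6 n2], insert c hu hv, auto simp: s d)
  have h63: "u6 \<bullet> (X63 *\<^sub>v v3) = v3 \<bullet> (X36 *\<^sub>v u6)"
    by (rule tr_sprod[of _ n6 n3], insert c hu hv, auto simp: s d)
  have h64: "u6 \<bullet> (X64 *\<^sub>v v4) = v4 \<bullet> (X46 *\<^sub>v u6)"
    by (rule tr_sprod[of _ n6 n4], insert c hu hv, auto simp: s d)
  have h65: "u6 \<bullet> (X65 *\<^sub>v v5) = v5 \<bullet> (X56 *\<^sub>v u6)"
    by (rule tr_sprod[of _ n6 n5], insert c hu hv, auto simp: s d)
  have h66: "u6 \<bullet> (X66 *\<^sub>v v6) = v6 \<bullet> (X66 *\<^sub>v u6)"
    by (rule tr_sprod[of _ n6 n6], insert c hu hv, auto simp: s d)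
  show "u \<bullet> (block_mat [[X11, X12, X13, X14, X15, X16], [X21, X22, X23, X24, X25, X26], [X31, X32, X33, X34, X35, X36], [X41, X42, X43, X44, X45, X46], [X51, X52, X53, X54, X55, X56], [X61, X62, X63, X64, X65, X66]] *\<^sub>v v) = v \<bullet> (block_mat [[X11, X12, X13, X14, X15, X16], [X21, X22, X23, X24, X25, X26], [X31, X32, X33, X34, X35, X36], [X41, X42, X43, X44, X45, X46], [X51, X52, X53, X54, X55, X56], [X61, X62, X63, X64, X65, X66]] *\<^sub>v u)"
    unfolding hu(7) hv(7) b6_bilin[OF c hv(1-6) hu(1-6)] b6_bilin[OF c hu(1-6) hv(1-6)]
    using h11 h12 h13 h14 h15 h16 h21 h22 h23 h24 h25 h26 h31 h32 h33 h34 h35 h36 h41 h42 h43 h44 h45 h46 h51 h52 h53 h54 h55 h56 h61 h62 h63 h64 h65 h66 by linarith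
qed





lemma diag_row_sprod:
  assumes D: "(D::real mat) \<in> carrier_mat m m" "diagonal_mat D" and j: "j < m" and x: "dim_vec x = m"
  shows "row D j \<bullet> x = D $$ (j,j) * x $ j"
proof -
  have "row D j \<bullet> x = (\<Sum>k\<in>{0..<m}. row D j $ k * x $ k)" unfolding scalar_prod_def using x by simp
  also have "\<dots> = (\<Sum>k\<in>{0..<m}. if k = j then D $$ (j,j) * x $ j else 0)"
    by (rule sum.cong, insert D j, auto simp: diagonal_mat_def)
  also have "\<dots> = D $$ (j,j) * x $ j" using j by simp
  finally show ?thesis .
qed

definition dinv :: "nat \<Rightarrow> real mat \<Rightarrow> real mat" where
  "dinv m D = mat m m (\<lambda>(i,j). if i = j then 1 / D $$ (i,i) else 0)"

lemma dinv_diag_pos: "D \<in> diag_pos m \<Longrightarrow> dinv m D \<in> diag_pos m"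
  unfolding diag_pos_def dinv_def diagonal_mat_def by auto

lemma diag_mult_index:
  assumes D: "(D::real mat) \<in> carrier_mat m m" "diagonal_mat D" and E: "E \<in> carrier_mat m n"
    and i: "i < m" and j: "j < n"
  shows "(D * E) $$ (i,j) = D $$ (i,i) * E $$ (i,j)"
  using diag_row_sprod[OF D i, of "col E j"] D E i j by auto

lemma diag_pos_mult_dinv:
  assumes D: "D \<in> diag_pos m"
  shows "D * dinv m D = 1\<^sub>m m" "dinv m D * D = 1\<^sub>m m"
proof -
  have Dc: "D \<in> carrier_mat m m" "diagonal_mat D" and pos: "\<forall>j<m. D $$ (j,j) > 0" using D unfolding diag_pos_def by auto
  have Ec: "dinv m D \<in> carrier_mat m m" "diagonal_mat (dinv m D)" using dinv_diag_pos[OF D] unfolding diag_pos_def by auto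
  show "D * dinv m D = 1\<^sub>m m"
  proof (rule eq_matI)
    fix i j assume "i < dim_row (1\<^sub>m m)" "j < dim_col (1\<^sub>m m)"
    then have i: "i < m" and j: "j < m" by auto
    show "(D * dinv m D) $$ (i,j) = 1\<^sub>m m $$ (i,j)"
      using diag_mult_index[OF Dc Ec(1) i j] pos i j by (auto simp: dinv_def)
  qed (use Dc Ec in auto)
  show "dinv m D * D = 1\<^sub>m m"
  proof (rule eq_matI)
    fix i j assume "i < dim_row (1\<^sub>m m)" "j < dim_col (1\<^sub>m m)"
    then have i: "i < m" and j: "j < m" by auto
    have "D $$ (i,j) = (if i = j then D $$ (i,i) else 0)" using Dc i j unfolding diagonal_mat_def by auto
    then show "(dinv m D * D) $$ (i,j) = 1\<^sub>m m $$ (i,j)"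
      using diag_mult_index[OF Ec Dc(1) i j] pos i j by (auto simp: dinv_def)
  qed (use Dc Ec in auto)
qed

lemma minv_eq:
  assumes D: "D \<in> carrier_mat n n" and E: "E \<in> carrier_mat n n" and DE: "D * E = 1\<^sub>m n" and ED: "E * D = 1\<^sub>m n"
  shows "minv D = E"
proof -
  have uniq: "E' = E" if E': "E' \<in> carrier_mat n n" "D * E' = 1\<^sub>m n" "E' * D = 1\<^sub>m n" for E'
  proof -
    have "E' = E' * 1\<^sub>m n" using E' by simp
    also have "\<dots> = E' * (D * E)" using DE by simp
    also have "\<dots> = (E' * D) * E" by (rule assoc_mult_mat[OF E'(1) D E, symmetric])
    also have "\<dots> = 1\<^sub>m n * E" by (simp only: E'(3))
    also have "\<dots> = E" using E' E by simp
    finally show ?thesis .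
  qed
  have dr: "dim_row D = n" using D by auto
  show ?thesis unfolding minv_def dr
  proof (rule someI2[of _ E])
    show "E \<in> carrier_mat n n \<and> D * E = 1\<^sub>m n \<and> E * D = 1\<^sub>m n" using E DE ED by blast
  next
    fix E' assume "E' \<in> carrier_mat n n \<and> D * E' = 1\<^sub>m n \<and> E' * D = 1\<^sub>m n"
    then show "E' = E" using uniq by blast
  qed
qed

lemma diag_pos_carrier: "D \<in> diag_pos m \<Longrightarrow> D \<in> carrier_mat m m"
  unfolding diag_pos_def by auto

lemma minv_diag_pos: assumes D: "D \<in> diag_pos m"
  shows "minv D = dinv m D" "minv D \<in> diag_pos m" "minv (minv D) = D"
    "D * minv D = 1\<^sub>m m" "minv D * D = 1\<^sub>m m" "minv D \<in> carrier_mat m m"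
proof -
  note c = diag_pos_carrier[OF D] diag_pos_carrier[OF dinv_diag_pos[OF D]]
  show 1: "minv D = dinv m D" by (rule minv_eq[OF c diag_pos_mult_dinv[OF D]])
  show "minv D \<in> diag_pos m" unfolding 1 by (rule dinv_diag_pos[OF D])
  show "minv (minv D) = D" unfolding 1 by (rule minv_eq[OF c(2) c(1) diag_pos_mult_dinv(2,1)[OF D]])
  show "D * minv D = 1\<^sub>m m" "minv D * D = 1\<^sub>m m" unfolding 1 by (rule diag_pos_mult_dinv[OF D])+
  show "minv D \<in> carrier_mat m m" unfolding 1 by (rule c(2))
qed

lemma one_diag_pos: "1\<^sub>m n \<in> diag_pos n"
  unfolding diag_pos_def diagonal_mat_def by auto

lemma minv_one: "minv (1\<^sub>m n) = 1\<^sub>m n"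
  by (rule minv_eq[of _ n], auto)

lemma diag_pos_sym: assumes "D \<in> diag_pos m" shows "transpose_mat D = D"
proof (rule eq_matI)
  fix i j assume "i < dim_row D" "j < dim_col D"
  then show "transpose_mat D $$ (i, j) = D $$ (i, j)"
    using assms unfolding diag_pos_def diagonal_mat_def by (cases "i = j") auto
qed (use assms in \<open>auto simp: diag_pos_def\<close>)

lemma diag_pos_quad:
  assumes D: "D \<in> diag_pos m" and x: "x \<in> carrier_vec m"
  shows "x \<bullet> (D *\<^sub>v x) \<ge> 0" "x \<noteq> 0\<^sub>v m \<Longrightarrow> x \<bullet> (D *\<^sub>v x) > 0"
proof -
  have Dc: "D \<in> carrier_mat m m" "diagonal_mat D" and pos: "\<forall>j<m. D $$ (j,j) > 0" using D unfolding diag_pos_def by auto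
  have e: "x \<bullet> (D *\<^sub>v x) = (\<Sum>j\<in>{0..<m}. D $$ (j,j) * (x $ j)^2)"
    unfolding scalar_prod_def using x Dc diag_row_sprod[OF Dc _, of _ x]
    by (intro sum.cong) (auto simp: power2_eq_square)
  show "x \<bullet> (D *\<^sub>v x) \<ge> 0" unfolding e using pos by (intro sum_nonneg) auto
  assume "x \<noteq> 0\<^sub>v m"
  then obtain j where j: "j < m" "x $ j \<noteq> 0" using x by (metis carrier_vecD eq_vecI index_zero_vec(1,2))
  show "x \<bullet> (D *\<^sub>v x) > 0" unfolding e
    by (rule sum_pos2[of _ j]) (use j pos in auto)
qed





lemma mv_assoc[simp]: "dim_col A = dim_row B \<Longrightarrow> dim_vec v = dim_col B \<Longrightarrow> ((A::real mat) * B) *\<^sub>v v = A *\<^sub>v (B *\<^sub>v v)"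
  by (rule assoc_mult_mat_vec[of _ "dim_row A" "dim_col A" _ "dim_col B"]) (auto intro: carrier_matI carrier_vecI)

lemma mv_add[simp]: "dim_row B = dim_row A \<Longrightarrow> dim_col B = dim_col A \<Longrightarrow> dim_vec v = dim_col A \<Longrightarrow> ((A::real mat) + B) *\<^sub>v v = A *\<^sub>v v + B *\<^sub>v v"
  by (rule add_mult_distrib_mat_vec[of _ "dim_row A" "dim_col A"]) (auto intro: carrier_matI carrier_vecI)

lemma mv_minus[simp]: "dim_row B = dim_row A \<Longrightarrow> dim_col B = dim_col A \<Longrightarrow> dim_vec v = dim_col A \<Longrightarrow> ((A::real mat) - B) *\<^sub>v v = A *\<^sub>v v - B *\<^sub>v v"
  by (rule minus_mult_distrib_mat_vec[of _ "dim_row A" "dim_col A"]) (auto intro: carrier_matI carrier_vecI)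

lemma mv_vadd[simp]: "dim_vec v = dim_col A \<Longrightarrow> dim_vec w = dim_col A \<Longrightarrow> (A::real mat) *\<^sub>v (v + w) = A *\<^sub>v v + A *\<^sub>v w"
  by (rule mult_add_distrib_mat_vec[of _ "dim_row A" "dim_col A"]) (auto intro: carrier_matI carrier_vecI)

lemma mv_vminus[simp]: "dim_vec v = dim_col A \<Longrightarrow> dim_vec w = dim_col A \<Longrightarrow> (A::real mat) *\<^sub>v (v - w) = A *\<^sub>v v - A *\<^sub>v w"
  by (rule mult_minus_distrib_mat_vec[of _ "dim_row A" "dim_col A"]) (auto intro: carrier_matI carrier_vecI)

lemma mv_smult[simp]: "dim_vec v = dim_col A \<Longrightarrow> (A::real mat) *\<^sub>v (k \<cdot>\<^sub>v v) = k \<cdot>\<^sub>v (A *\<^sub>v v)"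
  by (rule mult_mat_vec[of _ "dim_row A" "dim_col A"]) (auto intro: carrier_matI carrier_vecI)

lemma mv_vuminus[simp]: "dim_vec v = dim_col A \<Longrightarrow> (A::real mat) *\<^sub>v (- v) = - (A *\<^sub>v v)"
  by (intro eq_vecI) (auto simp: scalar_prod_uminus_right)

lemma sp_add_l[simp]: "dim_vec v2 = dim_vec v1 \<Longrightarrow> dim_vec v3 = dim_vec v1 \<Longrightarrow> ((v2 + v3) \<bullet> (v1::real vec)) = v2 \<bullet> v1 + v3 \<bullet> v1"
  by (rule add_scalar_prod_distrib[of _ "dim_vec v1"]) (auto intro: carrier_vecI)

lemma sp_minus_l[simp]: "dim_vec v2 = dim_vec v1 \<Longrightarrow> dim_vec v3 = dim_vec v1 \<Longrightarrow> ((v2 - v3) \<bullet> (v1::real vec)) = v2 \<bullet> v1 - v3 \<bullet> v1"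
  by (rule minus_scalar_prod_distrib[of _ "dim_vec v1"]) (auto intro: carrier_vecI)

lemma sp_minus_r[simp]: "dim_vec v2 = dim_vec v1 \<Longrightarrow> dim_vec v3 = dim_vec v1 \<Longrightarrow> ((v1::real vec) \<bullet> (v2 - v3)) = v1 \<bullet> v2 - v1 \<bullet> v3"
  by (rule scalar_prod_minus_distrib[of _ "dim_vec v1"]) (auto intro: carrier_vecI)

lemma sp_comm: "dim_vec v = dim_vec w \<Longrightarrow> (v::real vec) \<bullet> w = w \<bullet> v"
  by (rule comm_scalar_prod[of _ "dim_vec v"]) (auto intro: carrier_vecI)

lemma trv[simp]: "dim_vec z = dim_col A \<Longrightarrow> dim_vec w = dim_row A \<Longrightarrow> z \<bullet> (transpose_mat (A::real mat) *\<^sub>v w) = (A *\<^sub>v z) \<bullet> w"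
  using transpose_vec_mult_scalar[of A "dim_row A" "dim_col A" z w] sp_comm[of z "transpose_mat A *\<^sub>v w"] sp_comm[of w "A *\<^sub>v z"]
  by (auto intro: carrier_matI carrier_vecI)

lemma symv: "transpose_mat E = E \<Longrightarrow> dim_row E = dim_col E \<Longrightarrow> dim_vec u = dim_col E \<Longrightarrow> dim_vec v = dim_col E \<Longrightarrow>
   u \<bullet> ((E::real mat) *\<^sub>v v) = v \<bullet> (E *\<^sub>v u)"
  using trv[of u E v] sp_comm[of v "E *\<^sub>v u"] by simp

lemma Lop_quad:
  assumes L: "L \<in> carrier_mat r n" and Lb: "Lb \<in> carrier_mat r n" and Db: "Db \<in> carrier_mat r r"
    and E: "minv D = E" "E \<in> carrier_mat r r" "transpose_mat E = E" and z: "z \<in> carrier_vec n"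
  shows "z \<bullet> (Lop L D Lb Db *\<^sub>v z) = 2 * ((Lb *\<^sub>v z) \<bullet> (E *\<^sub>v (L *\<^sub>v z))) - (E *\<^sub>v (L *\<^sub>v z)) \<bullet> (Db *\<^sub>v (E *\<^sub>v (L *\<^sub>v z)))"
proof -
  have s: "(L *\<^sub>v z) \<bullet> (E *\<^sub>v (Lb *\<^sub>v z)) = (Lb *\<^sub>v z) \<bullet> (E *\<^sub>v (L *\<^sub>v z))"
    by (rule symv) (use assms in auto)
  have s2: "(L *\<^sub>v z) \<bullet> (E *\<^sub>v (Db *\<^sub>v (E *\<^sub>v (L *\<^sub>v z)))) = (E *\<^sub>v (L *\<^sub>v z)) \<bullet> (Db *\<^sub>v (E *\<^sub>v (L *\<^sub>v z)))"
    using symv[of E "L *\<^sub>v z" "Db *\<^sub>v (E *\<^sub>v (L *\<^sub>v z))"] sp_comm[of "Db *\<^sub>v (E *\<^sub>v (L *\<^sub>v z))" "E *\<^sub>v (L *\<^sub>v z)"] assms by auto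
  show ?thesis unfolding Lop_def E(1) using assms s s2 by auto
qed

lemma Lop_le:
  assumes L: "L \<in> carrier_mat r n" and Lb: "Lb \<in> carrier_mat r n" and Db: "Db \<in> carrier_mat r r"
    and E: "minv D = E" "E \<in> carrier_mat r r" "transpose_mat E = E" and z: "z \<in> carrier_vec n"
    and Dbi: "Dbi \<in> carrier_mat r r" "Dbi * Db = 1\<^sub>m r" "transpose_mat Dbi = Dbi" "transpose_mat Db = Db"
    "\<forall>w \<in> carrier_vec r. w \<bullet> (Dbi *\<^sub>v w) \<ge> 0"
  shows "z \<bullet> (Lop L D Lb Db *\<^sub>v z) \<le> (Lb *\<^sub>v z) \<bullet> (Dbi *\<^sub>v (Lb *\<^sub>v z))"
proof -
  define a where "a = Lb *\<^sub>v z"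
  define w where "w = E *\<^sub>v (L *\<^sub>v z)"
  have a: "a \<in> carrier_vec r" and w: "w \<in> carrier_vec r" unfolding a_def w_def using assms by auto
  have dw: "Dbi *\<^sub>v (Db *\<^sub>v w) = w"
  proof -
    have "(Dbi * Db) *\<^sub>v w = w" unfolding Dbi(2) using w by simp
    then show ?thesis using Dbi(1) Db w by simp
  qed
  have 0: "0 \<le> (a - Db *\<^sub>v w) \<bullet> (Dbi *\<^sub>v (a - Db *\<^sub>v w))" using Dbi(5) a w Db by auto
  have e1: "(Db *\<^sub>v w) \<bullet> (Dbi *\<^sub>v a) = a \<bullet> w"
    using symv[of Dbi "Db *\<^sub>v w" a] dw Dbi Db a w by auto
  have e2: "(Db *\<^sub>v w) \<bullet> w = w \<bullet> (Db *\<^sub>v w)" using sp_comm[of "Db *\<^sub>v w" w] Db w by auto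
  have "(a - Db *\<^sub>v w) \<bullet> (Dbi *\<^sub>v (a - Db *\<^sub>v w)) = a \<bullet> (Dbi *\<^sub>v a) - 2 * (a \<bullet> w) + w \<bullet> (Db *\<^sub>v w)"
    using a w Db Dbi dw e1 e2 by auto
  moreover have "z \<bullet> (Lop L D Lb Db *\<^sub>v z) = 2 * (a \<bullet> w) - w \<bullet> (Db *\<^sub>v w)"
    unfolding a_def w_def by (rule Lop_quad[OF assms(1-7)])
  ultimately show ?thesis using 0 unfolding a_def by linarith
qed

lemma Lop_eq:
  assumes L: "L \<in> carrier_mat r n" and Db: "Db \<in> carrier_mat r r"
    and E: "minv D = E" "E \<in> carrier_mat r r" "transpose_mat E = E" and z: "z \<in> carrier_vec n"
    and DE: "Db * E = 1\<^sub>m r"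
  shows "z \<bullet> (Lop L D L Db *\<^sub>v z) = (L *\<^sub>v z) \<bullet> (E *\<^sub>v (L *\<^sub>v z))"
proof -
  have dw: "Db *\<^sub>v (E *\<^sub>v (L *\<^sub>v z)) = L *\<^sub>v z"
  proof -
    have "(Db * E) *\<^sub>v (L *\<^sub>v z) = L *\<^sub>v z" unfolding DE using L z by simp
    then show ?thesis using E Db L z by simp
  qed
  have c: "(E *\<^sub>v (L *\<^sub>v z)) \<bullet> (L *\<^sub>v z) = (L *\<^sub>v z) \<bullet> (E *\<^sub>v (L *\<^sub>v z))"
    using sp_comm[of "E *\<^sub>v (L *\<^sub>v z)" "L *\<^sub>v z"] E L z by auto
  show ?thesis using Lop_quad[OF L L Db E z] dw c by simp
qed




lemma mat_of_row_mv[simp]: "dim_vec v = dim_vec r \<Longrightarrow> mat_of_row r *\<^sub>v v = vec 1 (\<lambda>_. r \<bullet> v)"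
  by (intro eq_vecI) auto

lemma vec1_sp[simp]: "dim_vec y = Suc 0 \<Longrightarrow> vec (Suc 0) (\<lambda>_. c) \<bullet> y = c * y $ 0" "dim_vec y = Suc 0 \<Longrightarrow> y \<bullet> vec (Suc 0) (\<lambda>_. c) = y $ 0 * c"
  by (auto simp: scalar_prod_def)

lemma scal_mat_mv[simp]: "dim_vec y = 1 \<Longrightarrow> scal_mat c *\<^sub>v y = c \<cdot>\<^sub>v y"
  by (intro eq_vecI) (auto simp: scal_mat_def scalar_prod_def row_def)

lemma sp1: "dim_vec y = Suc 0 \<Longrightarrow> y \<bullet> (y::real vec) = y $ 0 * y $ 0"
  by (auto simp: scalar_prod_def)

lemma trv_l[simp]: "dim_vec z = dim_col A \<Longrightarrow> dim_vec w = dim_row A \<Longrightarrow> (transpose_mat (A::real mat) *\<^sub>v w) \<bullet> z = (A *\<^sub>v z) \<bullet> w"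
  using trv[of z A w] sp_comm[of z "transpose_mat A *\<^sub>v w"] by simp

lemma row_mat_eq: "row_mat P i = mat_of_row (row P i)" by (simp add: row_mat_def)
lemma col_of_eq: "col_of v = transpose_mat (mat_of_row v)" by (simp add: col_of_def)

lemma col_of_carrier[simp]: "dim_row (col_of v) = dim_vec v" "dim_col (col_of v) = 1"
  by (auto simp: col_of_def)
lemma row_mat_dims[simp]: "dim_row (row_mat P i) = 1" "dim_col (row_mat P i) = dim_col P"
  by (auto simp: row_mat_def)
lemma scal_mat_dims[simp]: "dim_row (scal_mat c) = 1" "dim_col (scal_mat c) = 1"
  by (auto simp: scal_mat_def)

lemma Lop_dims[simp]: "dim_row (Lop L D Lb Db) = dim_col L" "dim_col (Lop L D Lb Db) = dim_col L"
  by (auto simp: Lop_def)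

definition LMImat where
  "LMImat nx nu m mw P F i B K D W Ab Bb db Kb bb Dh Wh = block_mat
    [[1\<^sub>m nu, 0\<^sub>m nu m, 0\<^sub>m nu mw, - (transpose_mat Bb * transpose_mat (row_mat P i)), 0\<^sub>m nu nx, Kb],
     [0\<^sub>m m nu, Dh, 0\<^sub>m m mw, col_of bb, 0\<^sub>m m nx, 0\<^sub>m m nx],
     [0\<^sub>m mw nu, 0\<^sub>m mw m, Wh, col_of db, 0\<^sub>m mw nx, 0\<^sub>m mw nx],
     [transpose_mat (- (transpose_mat Bb * transpose_mat (row_mat P i))), transpose_mat (col_of bb), transpose_mat (col_of db),
        scal_mat (2 * bb $ i) + Lop (transpose_mat B * transpose_mat (row_mat P i)) (1\<^sub>m nu) (transpose_mat Bb * transpose_mat (row_mat P i)) (1\<^sub>m nu),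
        row_mat P i, row_mat P i * Ab],
     [0\<^sub>m nx nu, 0\<^sub>m nx m, 0\<^sub>m nx mw, transpose_mat (row_mat P i), Lop F (minv W) F Wh, 0\<^sub>m nx nx],
     [transpose_mat Kb, 0\<^sub>m nx m, 0\<^sub>m nx mw, transpose_mat (row_mat P i * Ab), 0\<^sub>m nx nx,
        Lop P (minv D) P Dh + Lop K (1\<^sub>m nu) Kb (1\<^sub>m nu)]]"

lemma LMI_eq: "LMI nx nu m mw P F i B K D W Ab Bb db Kb bb Dh Wh = pos_def (LMImat nx nu m mw P F i B K D W Ab Bb db Kb bb Dh Wh)"
  unfolding LMI_def LMImat_def Let_def ..

lemma LMI_quad:
  assumes P: "P \<in> carrier_mat m nx" and F: "F \<in> carrier_mat mw nx" and i: "i < m"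
    and Ab: "Ab \<in> carrier_mat nx nx" and Bb: "Bb \<in> carrier_mat nx nu" and Kb: "Kb \<in> carrier_mat nu nx"
    and B: "B \<in> carrier_mat nx nu" and K: "K \<in> carrier_mat nu nx"
    and bb: "bb \<in> carrier_vec m" and db: "db \<in> carrier_vec mw"
    and D: "D \<in> diag_pos m" and W: "W \<in> diag_pos mw" and Dh: "Dh \<in> diag_pos m" and Wh: "Wh \<in> diag_pos mw"
    and x1: "x1 \<in> carrier_vec nu" and x2: "x2 \<in> carrier_vec m" and x3: "x3 \<in> carrier_vec mw"
    and y: "y \<in> carrier_vec 1" and z1: "z1 \<in> carrier_vec nx" and z2: "z2 \<in> carrier_vec nx"
  shows "(x1 @\<^sub>v x2 @\<^sub>v x3 @\<^sub>v y @\<^sub>v z1 @\<^sub>v z2) \<bullet> (LMImat nx nu m mw P F i B K D W Ab Bb db Kb bb Dh Wh *\<^sub>v (x1 @\<^sub>v x2 @\<^sub>v x3 @\<^sub>v y @\<^sub>v z1 @\<^sub>v z2))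
    = x1 \<bullet> x1 - 2 * (y $ 0) * (x1 \<bullet> (transpose_mat Bb *\<^sub>v row P i)) + 2 * (x1 \<bullet> (Kb *\<^sub>v z2))
      + x2 \<bullet> (Dh *\<^sub>v x2) + 2 * (y $ 0) * (x2 \<bullet> bb) + x3 \<bullet> (Wh *\<^sub>v x3) + 2 * (y $ 0) * (x3 \<bullet> db)
      + 2 * bb $ i * (y $ 0)^2 + y \<bullet> (Lop (transpose_mat B * transpose_mat (row_mat P i)) (1\<^sub>m nu) (transpose_mat Bb * transpose_mat (row_mat P i)) (1\<^sub>m nu) *\<^sub>v y)
      + 2 * (y $ 0) * (row P i \<bullet> z1) + 2 * (y $ 0) * (row P i \<bullet> (Ab *\<^sub>v z2))
      + z1 \<bullet> (Lop F (minv W) F Wh *\<^sub>v z1) + z2 \<bullet> (Lop P (minv D) P Dh *\<^sub>v z2) + z2 \<bullet> (Lop K (1\<^sub>m nu) Kb (1\<^sub>m nu) *\<^sub>v z2)"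
proof -
  note Dc = diag_pos_carrier[OF D] diag_pos_carrier[OF Dh] diag_pos_carrier[OF W] diag_pos_carrier[OF Wh]
    minv_diag_pos(6)[OF D] minv_diag_pos(6)[OF W]
  have r: "row P i \<in> carrier_vec nx" using P i by auto
  have c: "1\<^sub>m nu \<in> carrier_mat nu nu" "0\<^sub>m nu m \<in> carrier_mat nu m" "0\<^sub>m nu mw \<in> carrier_mat nu mw"
    "- (transpose_mat Bb * transpose_mat (row_mat P i)) \<in> carrier_mat nu 1" "0\<^sub>m nu nx \<in> carrier_mat nu nx" "Kb \<in> carrier_mat nu nx"
    "0\<^sub>m m nu \<in> carrier_mat m nu" "Dh \<in> carrier_mat m m" "0\<^sub>m m mw \<in> carrier_mat m mw" "col_of bb \<in> carrier_mat m 1" "0\<^sub>m m nx \<in> carrier_mat m nx" "0\<^sub>m m nx \<in> carrier_mat m nx"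
    "0\<^sub>m mw nu \<in> carrier_mat mw nu" "0\<^sub>m mw m \<in> carrier_mat mw m" "Wh \<in> carrier_mat mw mw" "col_of db \<in> carrier_mat mw 1" "0\<^sub>m mw nx \<in> carrier_mat mw nx" "0\<^sub>m mw nx \<in> carrier_mat mw nx"
    "transpose_mat (- (transpose_mat Bb * transpose_mat (row_mat P i))) \<in> carrier_mat 1 nu" "transpose_mat (col_of bb) \<in> carrier_mat 1 m" "transpose_mat (col_of db) \<in> carrier_mat 1 mw"
    "scal_mat (2 * bb $ i) + Lop (transpose_mat B * transpose_mat (row_mat P i)) (1\<^sub>m nu) (transpose_mat Bb * transpose_mat (row_mat P i)) (1\<^sub>m nu) \<in> carrier_mat 1 1"
    "row_mat P i \<in> carrier_mat 1 nx" "row_mat P i * Ab \<in> carrier_mat 1 nx"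
    "0\<^sub>m nx nu \<in> carrier_mat nx nu" "0\<^sub>m nx m \<in> carrier_mat nx m" "0\<^sub>m nx mw \<in> carrier_mat nx mw" "transpose_mat (row_mat P i) \<in> carrier_mat nx 1" "Lop F (minv W) F Wh \<in> carrier_mat nx nx" "0\<^sub>m nx nx \<in> carrier_mat nx nx"
    "transpose_mat Kb \<in> carrier_mat nx nu" "0\<^sub>m nx m \<in> carrier_mat nx m" "0\<^sub>m nx mw \<in> carrier_mat nx mw" "transpose_mat (row_mat P i * Ab) \<in> carrier_mat nx 1" "0\<^sub>m nx nx \<in> carrier_mat nx nx"
    "Lop P (minv D) P Dh + Lop K (1\<^sub>m nu) Kb (1\<^sub>m nu) \<in> carrier_mat nx nx"
    using assms Dc by (auto intro!: carrier_matI)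
  show ?thesis
    unfolding LMImat_def b6_bilin[OF c x1 x2 x3 y z1 z2 x1 x2 x3 y z1 z2]
    using assms Dc r sp_comm[of "Kb *\<^sub>v z2" x1] sp_comm[of bb x2] sp_comm[of db x3] sp_comm[of "Bb *\<^sub>v x1" "row P i"]
    by (simp add: row_mat_eq col_of_eq sp1 power2_eq_square algebra_simps)
qed




definition RPImat where
  "RPImat nx P F i A B K b d D W = block_mat
    [[scal_mat (2 * b $ i) - transpose_mat (col_of b) * D * col_of b
        - transpose_mat (col_of d) * W * col_of d,
      row_mat P i, row_mat P i * (A + B * K)],
     [transpose_mat (row_mat P i), transpose_mat F * W * F, 0\<^sub>m nx nx],
     [transpose_mat (row_mat P i * (A + B * K)), 0\<^sub>m nx nx, transpose_mat P * D * P]]"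

lemma RPI_eq: "RPI nx P F i A B K b d D W = pos_def (RPImat nx P F i A B K b d D W)"
  unfolding RPI_def RPImat_def ..

lemma trow_mv: "dim_vec y = Suc 0 \<Longrightarrow> transpose_mat (mat_of_row v) *\<^sub>v y = y $ 0 \<cdot>\<^sub>v (v :: real vec)"
  by (intro eq_vecI) (auto simp: scalar_prod_def)

lemma RPI_carrier:
  fixes P F A B K D W :: "real mat" and b d :: "real vec"
  assumes P: "P \<in> carrier_mat m nx" and F: "F \<in> carrier_mat mw nx" and i: "i < m"
    and A: "A \<in> carrier_mat nx nx" and B: "B \<in> carrier_mat nx nu" and K: "K \<in> carrier_mat nu nx"
    and b: "b \<in> carrier_vec m" and d: "d \<in> carrier_vec mw"
    and D: "D \<in> carrier_mat m m" and W: "W \<in> carrier_mat mw mw"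
  shows "scal_mat (2 * b $ i) - transpose_mat (col_of b) * D * col_of b - transpose_mat (col_of d) * W * col_of d \<in> carrier_mat 1 1"
   "row_mat P i \<in> carrier_mat 1 nx" "row_mat P i * (A + B * K) \<in> carrier_mat 1 nx"
   "transpose_mat (row_mat P i) \<in> carrier_mat nx 1" "transpose_mat F * W * F \<in> carrier_mat nx nx" "0\<^sub>m nx nx \<in> carrier_mat nx nx"
   "transpose_mat (row_mat P i * (A + B * K)) \<in> carrier_mat nx 1" "0\<^sub>m nx nx \<in> carrier_mat nx nx" "transpose_mat P * D * P \<in> carrier_mat nx nx"
  using assms by (auto intro!: carrier_matI)

lemma RPI_quad:
  fixes P F A B K D W :: "real mat" and b d y z1 z2 :: "real vec"
  assumes P: "P \<in> carrier_mat m nx" and F: "F \<in> carrier_mat mw nx" and i: "i < m"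
    and A: "A \<in> carrier_mat nx nx" and B: "B \<in> carrier_mat nx nu" and K: "K \<in> carrier_mat nu nx"
    and b: "b \<in> carrier_vec m" and d: "d \<in> carrier_vec mw"
    and D: "D \<in> carrier_mat m m" and W: "W \<in> carrier_mat mw mw"
    and y: "y \<in> carrier_vec 1" and z1: "z1 \<in> carrier_vec nx" and z2: "z2 \<in> carrier_vec nx"
  shows "(y @\<^sub>v z1 @\<^sub>v z2) \<bullet> (RPImat nx P F i A B K b d D W *\<^sub>v (y @\<^sub>v z1 @\<^sub>v z2))
    = 2 * b $ i * (y $ 0)^2 - (y $ 0)^2 * (b \<bullet> (D *\<^sub>v b)) - (y $ 0)^2 * (d \<bullet> (W *\<^sub>v d))
      + 2 * (y $ 0) * (row P i \<bullet> z1) + 2 * (y $ 0) * (row P i \<bullet> (A *\<^sub>v z2)) + 2 * (y $ 0) * (row P i \<bullet> (B *\<^sub>v (K *\<^sub>v z2)))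
      + (F *\<^sub>v z1) \<bullet> (W *\<^sub>v (F *\<^sub>v z1)) + (P *\<^sub>v z2) \<bullet> (D *\<^sub>v (P *\<^sub>v z2))"
proof -
  have r: "row P i \<in> carrier_vec nx" using P i by auto
  show ?thesis
    unfolding RPImat_def b3_bilin[OF RPI_carrier[OF assms(1-10)] y z1 z2 y z1 z2]
    using assms r sp_comm[of z1 "row P i"]
    by (simp add: row_mat_eq col_of_eq sp1 trow_mv power2_eq_square algebra_simps)
qed




lemma sp_self_nonneg: "(v::real vec) \<bullet> v \<ge> 0"
  unfolding scalar_prod_def by (intro sum_nonneg) auto

lemma sp_self_pos: "(v::real vec) \<in> carrier_vec n \<Longrightarrow> v \<noteq> 0\<^sub>v n \<Longrightarrow> v \<bullet> v > 0"
  using diag_pos_quad(2)[OF one_diag_pos, of v n] by simp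

lemma app0: "x \<in> carrier_vec a \<Longrightarrow> y \<in> carrier_vec b \<Longrightarrow> (x @\<^sub>v y = 0\<^sub>v (a+b)) = (x = 0\<^sub>v a \<and> y = 0\<^sub>v b)"
proof -
  assume x: "x \<in> carrier_vec a" and y: "y \<in> carrier_vec b"
  have "0\<^sub>v (a+b) = (0\<^sub>v a :: 'a vec) @\<^sub>v 0\<^sub>v b" by (intro eq_vecI) auto
  then show ?thesis using append_vec_eq[OF x, of "0\<^sub>v a" y "0\<^sub>v b"] by auto
qed

lemma sym11: "(X::real mat) \<in> carrier_mat 1 1 \<Longrightarrow> transpose_mat X = X"
  by (intro eq_matI) auto

lemma symFWF:
  assumes F: "(F::real mat) \<in> carrier_mat a n" and W: "W \<in> carrier_mat a a" and s: "transpose_mat W = W"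
  shows "transpose_mat (transpose_mat F * W * F) = transpose_mat F * W * F"
proof -
  have "transpose_mat (transpose_mat F * W * F) = transpose_mat F * transpose_mat (transpose_mat F * W)"
    by (rule transpose_mult[of _ n a]) (use F W in auto)
  also have "transpose_mat (transpose_mat F * W) = transpose_mat W * F"
    by (subst transpose_mult[of _ n a]) (use F W in auto)
  also have "transpose_mat F * (transpose_mat W * F) = transpose_mat F * W * F"
    unfolding s by (rule assoc_mult_mat[symmetric]) (use F W in auto)
  finally show ?thesis .
qed

lemma LMImat_carrier:
  assumes P: "P \<in> carrier_mat m nx" and F: "F \<in> carrier_mat mw nx" and i: "i < m"
    and Ab: "Ab \<in> carrier_mat nx nx" and Bb: "Bb \<in> carrier_mat nx nu" and Kb: "Kb \<in> carrier_mat nu nx"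
    and B: "B \<in> carrier_mat nx nu" and K: "K \<in> carrier_mat nu nx"
    and bb: "bb \<in> carrier_vec m" and db: "db \<in> carrier_vec mw"
    and D: "D \<in> diag_pos m" and W: "W \<in> diag_pos mw" and Dh: "Dh \<in> diag_pos m" and Wh: "Wh \<in> diag_pos mw"
  shows "LMImat nx nu m mw P F i B K D W Ab Bb db Kb bb Dh Wh \<in> carrier_mat (nu+m+mw+1+nx+nx) (nu+m+mw+1+nx+nx)"
proof -
  note Dc = diag_pos_carrier[OF D] diag_pos_carrier[OF Dh] diag_pos_carrier[OF W] diag_pos_carrier[OF Wh]
    minv_diag_pos(6)[OF D] minv_diag_pos(6)[OF W]
  show ?thesis unfolding LMImat_def
    by (rule b6_carrier) (use assms Dc in \<open>auto intro!: carrier_matI\<close>)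
qed

lemma part_b:
  fixes P F B K D W Ab Bb Kb Dh Wh :: "real mat" and bb db :: "real vec"
  assumes P: "P \<in> carrier_mat m nx" and F: "F \<in> carrier_mat mw nx" and i: "i < m"
    and Ab: "Ab \<in> carrier_mat nx nx" and Bb: "Bb \<in> carrier_mat nx nu" and Kb: "Kb \<in> carrier_mat nu nx"
    and B: "B \<in> carrier_mat nx nu" and K: "K \<in> carrier_mat nu nx"
    and bb: "bb \<in> carrier_vec m" and db: "db \<in> carrier_vec mw"
    and D: "D \<in> diag_pos m" and W: "W \<in> diag_pos mw" and Dh: "Dh \<in> diag_pos m" and Wh: "Wh \<in> diag_pos mw"
    and lmi: "LMI nx nu m mw P F i B K D W Ab Bb db Kb bb Dh Wh"
  shows "RPI nx P F i Ab Bb Kb bb db (minv Dh) (minv Wh)"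
proof -
  define M where "M = LMImat nx nu m mw P F i B K D W Ab Bb db Kb bb Dh Wh"
  define Dhi where "Dhi = minv Dh"
  define Whi where "Whi = minv Wh"
  have Mc: "M \<in> carrier_mat (nu+m+mw+1+nx+nx) (nu+m+mw+1+nx+nx)"
    unfolding M_def by (rule LMImat_carrier[OF assms(1-14)])
  have posM: "\<And>v. v \<in> carrier_vec (nu+m+mw+1+nx+nx) \<Longrightarrow> v \<noteq> 0\<^sub>v (nu+m+mw+1+nx+nx) \<Longrightarrow> v \<bullet> (M *\<^sub>v v) > 0"
    using lmi Mc unfolding LMI_eq M_def[symmetric] pos_def_def by auto
  note Dc = diag_pos_carrier[OF D] diag_pos_carrier[OF Dh] diag_pos_carrier[OF W] diag_pos_carrier[OF Wh]
    minv_diag_pos(6)[OF D] minv_diag_pos(6)[OF W]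
  have Dhi: "Dhi \<in> diag_pos m" "Dhi \<in> carrier_mat m m" "Dh * Dhi = 1\<^sub>m m" "Dhi * Dh = 1\<^sub>m m" "transpose_mat Dhi = Dhi"
    "minv Dhi = Dh"
    unfolding Dhi_def using minv_diag_pos[OF Dh] diag_pos_sym by auto
  have Whi: "Whi \<in> diag_pos mw" "Whi \<in> carrier_mat mw mw" "Wh * Whi = 1\<^sub>m mw" "Whi * Wh = 1\<^sub>m mw" "transpose_mat Whi = Whi"
    "minv Whi = Wh"
    unfolding Whi_def using minv_diag_pos[OF Wh] diag_pos_sym by auto
  have Wsym: "transpose_mat W = W" "transpose_mat Wh = Wh" "transpose_mat D = D" "transpose_mat Dh = Dh"
    using diag_pos_sym W Wh D Dh by auto
  have mW: "minv (minv W) = W" "minv (minv D) = D" using minv_diag_pos(3) W D by auto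
  define N where "N = RPImat nx P F i Ab Bb Kb bb db Dhi Whi"
  note Nc0 = RPI_carrier[OF P F i Ab Bb Kb bb db Dhi(2) Whi(2)]
  have Nc: "N \<in> carrier_mat (1+nx+nx) (1+nx+nx)" unfolding N_def RPImat_def by (rule b3_carrier[OF Nc0])
  have Nsym: "transpose_mat N = N" unfolding N_def RPImat_def
  proof (rule b3_sym[OF Nc0])
    show "transpose_mat (scal_mat (2 * bb $ i) - transpose_mat (col_of bb) * Dhi * col_of bb - transpose_mat (col_of db) * Whi * col_of db)
      = scal_mat (2 * bb $ i) - transpose_mat (col_of bb) * Dhi * col_of bb - transpose_mat (col_of db) * Whi * col_of db"
      by (rule sym11[OF Nc0(1)])
    show "transpose_mat (transpose_mat F * Whi * F) = transpose_mat F * Whi * F" by (rule symFWF[OF F Whi(2,5)])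
    show "transpose_mat (transpose_mat P * Dhi * P) = transpose_mat P * Dhi * P" by (rule symFWF[OF P Dhi(2,5)])
  qed auto
  have posN: "v \<bullet> (N *\<^sub>v v) > 0" if v: "v \<in> carrier_vec (1+nx+nx)" and v0: "v \<noteq> 0\<^sub>v (1+nx+nx)" for v
  proof -
    have v': "v \<in> carrier_vec (1+(nx+nx))" using v by (simp add: ac_simps)
    obtain y z1 z2 where yz: "y \<in> carrier_vec 1" "z1 \<in> carrier_vec nx" "z2 \<in> carrier_vec nx" "v = y @\<^sub>v z1 @\<^sub>v z2"
      using split3[OF v'] by blast
    define t where "t = y $ 0"
    define r where "r = row P i"
    define q where "q = transpose_mat Bb *\<^sub>v r"
    define k where "k = Kb *\<^sub>v z2"
    have r: "r \<in> carrier_vec nx" unfolding r_def using P i by auto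
    have q: "q \<in> carrier_vec nu" and k: "k \<in> carrier_vec nu" unfolding q_def k_def using r Bb Kb yz by auto
    define x1 where "x1 = t \<cdot>\<^sub>v q - k"
    define x2 where "x2 = (- t) \<cdot>\<^sub>v (Dhi *\<^sub>v bb)"
    define x3 where "x3 = (- t) \<cdot>\<^sub>v (Whi *\<^sub>v db)"
    have x: "x1 \<in> carrier_vec nu" "x2 \<in> carrier_vec m" "x3 \<in> carrier_vec mw"
      unfolding x1_def x2_def x3_def using q k Dhi Whi bb db by auto
    define X where "X = x1 @\<^sub>v x2 @\<^sub>v x3 @\<^sub>v y @\<^sub>v z1 @\<^sub>v z2"
    have e: "nu+m+mw+1+nx+nx = nu+(m+(mw+(1+(nx+nx))))" by simp
    have Xc: "X \<in> carrier_vec (nu+m+mw+1+nx+nx)" unfolding e X_def using x yz by (intro append_carrier_vec)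
    have X0: "X \<noteq> 0\<^sub>v (nu+m+mw+1+nx+nx)"
    proof
      assume "X = 0\<^sub>v (nu+m+mw+1+nx+nx)"
      then have "X = 0\<^sub>v (nu+(m+(mw+(1+(nx+nx)))))" unfolding e .
      then have h: "x1 @\<^sub>v x2 @\<^sub>v x3 @\<^sub>v (y @\<^sub>v z1 @\<^sub>v z2) = 0\<^sub>v (nu+(m+(mw+(1+(nx+nx)))))" unfolding X_def .
      have s: "y @\<^sub>v z1 @\<^sub>v z2 \<in> carrier_vec (1+(nx+nx))" using yz by (intro append_carrier_vec)
      from h have "y @\<^sub>v z1 @\<^sub>v z2 = 0\<^sub>v (1+(nx+nx))"
        by (simp only: app0[OF x(1) append_carrier_vec[OF x(2) append_carrier_vec[OF x(3) s]]]
          app0[OF x(2) append_carrier_vec[OF x(3) s]] app0[OF x(3) s])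
      then show False using v0 yz(4) by (simp add: add.assoc)
    qed
    define l4 where "l4 = y \<bullet> (Lop (transpose_mat B * transpose_mat (row_mat P i)) (1\<^sub>m nu) (transpose_mat Bb * transpose_mat (row_mat P i)) (1\<^sub>m nu) *\<^sub>v y)"
    define l5 where "l5 = z1 \<bullet> (Lop F (minv W) F Wh *\<^sub>v z1)"
    define l6 where "l6 = z2 \<bullet> (Lop P (minv D) P Dh *\<^sub>v z2)"
    define l7 where "l7 = z2 \<bullet> (Lop K (1\<^sub>m nu) Kb (1\<^sub>m nu) *\<^sub>v z2)"
    have QM: "X \<bullet> (M *\<^sub>v X) = x1 \<bullet> x1 - 2 * t * (x1 \<bullet> q) + 2 * (x1 \<bullet> k)
      + x2 \<bullet> (Dh *\<^sub>v x2) + 2 * t * (x2 \<bullet> bb) + x3 \<bullet> (Wh *\<^sub>v x3) + 2 * t * (x3 \<bullet> db)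
      + 2 * bb $ i * t^2 + l4 + 2 * t * (r \<bullet> z1) + 2 * t * (r \<bullet> (Ab *\<^sub>v z2)) + l5 + l6 + l7"
      unfolding X_def M_def t_def q_def k_def r_def l4_def l5_def l6_def l7_def
      by (rule LMI_quad[OF assms(1-14) x yz(1-3)])
    have QN: "v \<bullet> (N *\<^sub>v v) = 2 * bb $ i * t^2 - t^2 * (bb \<bullet> (Dhi *\<^sub>v bb)) - t^2 * (db \<bullet> (Whi *\<^sub>v db))
      + 2 * t * (r \<bullet> z1) + 2 * t * (r \<bullet> (Ab *\<^sub>v z2)) + 2 * t * (r \<bullet> (Bb *\<^sub>v k))
      + (F *\<^sub>v z1) \<bullet> (Whi *\<^sub>v (F *\<^sub>v z1)) + (P *\<^sub>v z2) \<bullet> (Dhi *\<^sub>v (P *\<^sub>v z2))"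
      unfolding yz(4) N_def t_def r_def k_def
      by (rule RPI_quad[OF P F i Ab Bb Kb bb db Dhi(2) Whi(2) yz(1-3)])
    have DhDhi: "Dh *\<^sub>v (Dhi *\<^sub>v bb) = bb"
    proof -
      have "(Dh * Dhi) *\<^sub>v bb = bb" unfolding Dhi(3) using bb by simp
      then show ?thesis using Dc Dhi(2) bb by simp
    qed
    have WhWhi: "Wh *\<^sub>v (Whi *\<^sub>v db) = db"
    proof -
      have "(Wh * Whi) *\<^sub>v db = db" unfolding Whi(3) using db by simp
      then show ?thesis using Dc Whi(2) db by simp
    qed
    have cqk: "k \<bullet> q = q \<bullet> k" by (rule sp_comm) (use q k in auto)
    have rBk: "r \<bullet> (Bb *\<^sub>v k) = q \<bullet> k"
      unfolding q_def using trv_l[of k Bb r] sp_comm[of "Bb *\<^sub>v k" r] r k Bb by auto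
    have cb: "(Dhi *\<^sub>v bb) \<bullet> bb = bb \<bullet> (Dhi *\<^sub>v bb)" by (rule sp_comm) (use Dhi bb in auto)
    have cd: "(Whi *\<^sub>v db) \<bullet> db = db \<bullet> (Whi *\<^sub>v db)" by (rule sp_comm) (use Whi db in auto)
    have e1: "x1 \<bullet> x1 = t * t * (q \<bullet> q) - 2 * t * (q \<bullet> k) + k \<bullet> k"
      unfolding x1_def using q k cqk by (simp add: algebra_simps)
    have e2: "x1 \<bullet> q = t * (q \<bullet> q) - q \<bullet> k" unfolding x1_def using q k cqk by simp
    have e3: "x1 \<bullet> k = t * (q \<bullet> k) - k \<bullet> k" unfolding x1_def using q k cqk by simp
    have e4: "x2 \<bullet> (Dh *\<^sub>v x2) = t * t * (bb \<bullet> (Dhi *\<^sub>v bb))" unfolding x2_def using DhDhi cb Dhi Dc bb by simp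
    have e5: "x2 \<bullet> bb = - t * (bb \<bullet> (Dhi *\<^sub>v bb))" unfolding x2_def using cb Dhi bb by simp
    have e6: "x3 \<bullet> (Wh *\<^sub>v x3) = t * t * (db \<bullet> (Whi *\<^sub>v db))" unfolding x3_def using WhWhi cd Whi Dc db by simp
    have e7: "x3 \<bullet> db = - t * (db \<bullet> (Whi *\<^sub>v db))" unfolding x3_def using cd Whi db by simp
    have BPy: "(transpose_mat Bb * transpose_mat (row_mat P i)) *\<^sub>v y = t \<cdot>\<^sub>v q"
      unfolding t_def q_def r_def using Bb P i yz by (simp add: row_mat_eq trow_mv)
    have b4: "l4 \<le> t * t * (q \<bullet> q)"
    proof -
      have "l4 \<le> ((transpose_mat Bb * transpose_mat (row_mat P i)) *\<^sub>v y) \<bullet> (1\<^sub>m nu *\<^sub>v ((transpose_mat Bb * transpose_mat (row_mat P i)) *\<^sub>v y))"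
        unfolding l4_def
        by (rule Lop_le[of _ nu 1 _ "1\<^sub>m nu" _ "1\<^sub>m nu"])
           (use B Bb P i yz sp_self_nonneg minv_one in \<open>auto intro!: carrier_matI\<close>)
      then show ?thesis unfolding BPy using q by simp
    qed
    have b5: "l5 \<le> (F *\<^sub>v z1) \<bullet> (Whi *\<^sub>v (F *\<^sub>v z1))"
      unfolding l5_def
      by (rule Lop_le[of _ mw nx _ Wh _ W]) (use F Dc mW Wsym Whi yz diag_pos_quad(1)[OF Whi(1)] in auto)
    have b6: "l6 \<le> (P *\<^sub>v z2) \<bullet> (Dhi *\<^sub>v (P *\<^sub>v z2))"
      unfolding l6_def
      by (rule Lop_le[of _ m nx _ Dh _ D]) (use P Dc mW Wsym Dhi yz diag_pos_quad(1)[OF Dhi(1)] in auto)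
    have b7: "l7 \<le> k \<bullet> k"
    proof -
      have "l7 \<le> k \<bullet> (1\<^sub>m nu *\<^sub>v k)"
        unfolding l7_def k_def
        by (rule Lop_le[of _ nu nx _ "1\<^sub>m nu" _ "1\<^sub>m nu"]) (use K Kb yz sp_self_nonneg minv_one in auto)
      then show ?thesis using k by simp
    qed
    have "X \<bullet> (M *\<^sub>v X) > 0" by (rule posM[OF Xc X0])
    then have "0 < - t * t * (q \<bullet> q) + 2 * t * (q \<bullet> k) - k \<bullet> k - t * t * (bb \<bullet> (Dhi *\<^sub>v bb)) - t * t * (db \<bullet> (Whi *\<^sub>v db))
      + 2 * bb $ i * (t * t) + l4 + 2 * t * (r \<bullet> z1) + 2 * t * (r \<bullet> (Ab *\<^sub>v z2)) + l5 + l6 + l7"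
      unfolding QM e1 e2 e3 e4 e5 e6 e7 by (simp add: algebra_simps power2_eq_square)
    then show ?thesis unfolding QN rBk using b4 b5 b6 b7 by (simp add: algebra_simps power2_eq_square)
  qed
  show ?thesis unfolding RPI_eq pos_def_def Dhi_def[symmetric] Whi_def[symmetric] N_def[symmetric]
    using Nc Nsym posN by auto
qed




lemma mv_zero[simp]: "dim_col A = n \<Longrightarrow> (A::real mat) *\<^sub>v 0\<^sub>v n = 0\<^sub>v (dim_row A)"
  by (intro eq_vecI) (auto simp: scalar_prod_def)

lemma trACE:
  assumes A: "(A::real mat) \<in> carrier_mat r n" and C: "C \<in> carrier_mat r n" and E: "E \<in> carrier_mat r r" and s: "transpose_mat E = E"
  shows "transpose_mat (transpose_mat A * E * C) = transpose_mat C * E * A"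
proof -
  have "transpose_mat (transpose_mat A * E * C) = transpose_mat C * transpose_mat (transpose_mat A * E)"
    by (rule transpose_mult[of _ n r]) (use A C E in auto)
  also have "transpose_mat (transpose_mat A * E) = transpose_mat E * A"
    by (subst transpose_mult[of _ n r]) (use A E in auto)
  also have "transpose_mat C * (transpose_mat E * A) = transpose_mat C * E * A"
    unfolding s by (rule assoc_mult_mat[symmetric]) (use A C E in auto)
  finally show ?thesis .
qed

lemma Lop_sym:
  assumes L: "L \<in> carrier_mat r n" and Lb: "Lb \<in> carrier_mat r n" and Db: "Db \<in> carrier_mat r r"
    and E: "minv D = E" "E \<in> carrier_mat r r" "transpose_mat E = E" and Ds: "transpose_mat Db = Db"
  shows "transpose_mat (Lop L D Lb Db) = Lop L D Lb Db"
proof -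
  define G where "G = E * Db * E"
  have G: "G \<in> carrier_mat r r" unfolding G_def using E Db by auto
  have Gs: "transpose_mat G = G" unfolding G_def
    using transpose_mult[of "E * Db" r r E r] transpose_mult[of E r r Db r] E Db Ds
    by (simp add: assoc_mult_mat[of E r r Db r E r])
  have T3: "transpose_mat L * E * Db * E * L = transpose_mat L * G * L"
  proof -
    have "transpose_mat L * E * Db * E = transpose_mat L * G" unfolding G_def
      using L E Db by (simp add: assoc_mult_mat[of "transpose_mat L" n r _ r _ r])
    then show ?thesis by simp
  qed
  have c: "transpose_mat Lb * E * L \<in> carrier_mat n n" "transpose_mat L * E * Lb \<in> carrier_mat n n"
    "transpose_mat L * G * L \<in> carrier_mat n n" using L Lb E G by auto
  show ?thesis unfolding Lop_def E(1) T3
    using trACE[OF Lb L E(2,3)] trACE[OF L Lb E(2,3)] trACE[OF L L G Gs] c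
    by (simp add: transpose_minus[of _ n n] transpose_add[of _ n n] comm_add_mat[of "transpose_mat L * E * Lb" n n])
qed




lemma zero_app: "0\<^sub>v a @\<^sub>v 0\<^sub>v b = (0\<^sub>v (a+b) :: real vec)"
  by (intro eq_vecI) auto

lemma part_a:
  fixes P F A B K D W :: "real mat" and b d :: "real vec"
  assumes P: "P \<in> carrier_mat m nx" and F: "F \<in> carrier_mat mw nx" and i: "i < m"
    and A: "A \<in> carrier_mat nx nx" and B: "B \<in> carrier_mat nx nu" and K: "K \<in> carrier_mat nu nx"
    and b: "b \<in> carrier_vec m" and d: "d \<in> carrier_vec mw"
    and D: "D \<in> diag_pos m" and W: "W \<in> diag_pos mw"
    and rpi: "RPI nx P F i A B K b d D W"
  shows "LMI nx nu m mw P F i B K D W A B d K b (minv D) (minv W)"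
proof -
  define Dh where "Dh = minv D"
  define Wh where "Wh = minv W"
  note Dc = diag_pos_carrier[OF D] diag_pos_carrier[OF W]
  have Dh: "Dh \<in> diag_pos m" "Dh \<in> carrier_mat m m" "Dh * D = 1\<^sub>m m" "transpose_mat Dh = Dh" "minv Dh = D"
    unfolding Dh_def using minv_diag_pos[OF D] diag_pos_sym by auto
  have Wh: "Wh \<in> diag_pos mw" "Wh \<in> carrier_mat mw mw" "Wh * W = 1\<^sub>m mw" "transpose_mat Wh = Wh" "minv Wh = W"
    unfolding Wh_def using minv_diag_pos[OF W] diag_pos_sym by auto
  have Ws: "transpose_mat W = W" "transpose_mat D = D" using diag_pos_sym W D by auto
  define M where "M = LMImat nx nu m mw P F i B K D W A B d K b Dh Wh"
  have Mc: "M \<in> carrier_mat (nu+m+mw+1+nx+nx) (nu+m+mw+1+nx+nx)"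
    unfolding M_def by (rule LMImat_carrier[OF P F i A B K B K b d D W Dh(1) Wh(1)])
  have c: "1\<^sub>m nu \<in> carrier_mat nu nu" "0\<^sub>m nu m \<in> carrier_mat nu m" "0\<^sub>m nu mw \<in> carrier_mat nu mw"
    "- (transpose_mat B * transpose_mat (row_mat P i)) \<in> carrier_mat nu 1" "0\<^sub>m nu nx \<in> carrier_mat nu nx" "K \<in> carrier_mat nu nx"
    "0\<^sub>m m nu \<in> carrier_mat m nu" "Dh \<in> carrier_mat m m" "0\<^sub>m m mw \<in> carrier_mat m mw" "col_of b \<in> carrier_mat m 1" "0\<^sub>m m nx \<in> carrier_mat m nx" "0\<^sub>m m nx \<in> carrier_mat m nx"
    "0\<^sub>m mw nu \<in> carrier_mat mw nu" "0\<^sub>m mw m \<in> carrier_mat mw m" "Wh \<in> carrier_mat mw mw" "col_of d \<in> carrier_mat mw 1" "0\<^sub>m mw nx \<in> carrier_mat mw nx" "0\<^sub>m mw nx \<in> carrier_mat mw nx"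
    "transpose_mat (- (transpose_mat B * transpose_mat (row_mat P i))) \<in> carrier_mat 1 nu" "transpose_mat (col_of b) \<in> carrier_mat 1 m" "transpose_mat (col_of d) \<in> carrier_mat 1 mw"
    "scal_mat (2 * b $ i) + Lop (transpose_mat B * transpose_mat (row_mat P i)) (1\<^sub>m nu) (transpose_mat B * transpose_mat (row_mat P i)) (1\<^sub>m nu) \<in> carrier_mat 1 1"
    "row_mat P i \<in> carrier_mat 1 nx" "row_mat P i * A \<in> carrier_mat 1 nx"
    "0\<^sub>m nx nu \<in> carrier_mat nx nu" "0\<^sub>m nx m \<in> carrier_mat nx m" "0\<^sub>m nx mw \<in> carrier_mat nx mw" "transpose_mat (row_mat P i) \<in> carrier_mat nx 1" "Lop F (minv W) F Wh \<in> carrier_mat nx nx" "0\<^sub>m nx nx \<in> carrier_mat nx nx"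
    "transpose_mat K \<in> carrier_mat nx nu" "0\<^sub>m nx m \<in> carrier_mat nx m" "0\<^sub>m nx mw \<in> carrier_mat nx mw" "transpose_mat (row_mat P i * A) \<in> carrier_mat nx 1" "0\<^sub>m nx nx \<in> carrier_mat nx nx"
    "Lop P (minv D) P Dh + Lop K (1\<^sub>m nu) K (1\<^sub>m nu) \<in> carrier_mat nx nx"
    using assms Dc Dh Wh minv_diag_pos(6)[OF D] minv_diag_pos(6)[OF W] by (auto intro!: carrier_matI)
  have L5s: "transpose_mat (Lop F (minv W) F Wh) = Lop F (minv W) F Wh"
    by (rule Lop_sym[of F mw nx F Wh "minv W" W]) (use F Wh(2,4) Dc Ws minv_diag_pos(3)[OF W] in auto)
  have L6s: "transpose_mat (Lop P (minv D) P Dh) = Lop P (minv D) P Dh"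
    by (rule Lop_sym[of P m nx P Dh "minv D" D]) (use P Dh(2,4) Dc Ws minv_diag_pos(3)[OF D] in auto)
  have L7s: "transpose_mat (Lop K (1\<^sub>m nu) K (1\<^sub>m nu)) = Lop K (1\<^sub>m nu) K (1\<^sub>m nu)"
    by (rule Lop_sym[of _ nu nx]) (use K minv_one in auto)
  have L6c: "Lop P (minv D) P Dh \<in> carrier_mat nx nx" "Lop K (1\<^sub>m nu) K (1\<^sub>m nu) \<in> carrier_mat nx nx"
    using P K by (auto intro!: carrier_matI)
  have Msym: "transpose_mat M = M" unfolding M_def LMImat_def
  proof (rule b6_sym[OF c])
    show "transpose_mat (scal_mat (2 * b $ i) + Lop (transpose_mat B * transpose_mat (row_mat P i)) (1\<^sub>m nu) (transpose_mat B * transpose_mat (row_mat P i)) (1\<^sub>m nu))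
      = scal_mat (2 * b $ i) + Lop (transpose_mat B * transpose_mat (row_mat P i)) (1\<^sub>m nu) (transpose_mat B * transpose_mat (row_mat P i)) (1\<^sub>m nu)"
      by (rule sym11[OF c(22)])
    show "transpose_mat (Lop P (minv D) P Dh + Lop K (1\<^sub>m nu) K (1\<^sub>m nu)) = Lop P (minv D) P Dh + Lop K (1\<^sub>m nu) K (1\<^sub>m nu)"
      using transpose_add[OF L6c] L6s L7s by simp
  qed (use Dh Wh L5s in auto)
  note rpi' = rpi[unfolded RPI_eq pos_def_def]
  define N where "N = RPImat nx P F i A B K b d D W"
  note Nc0 = RPI_carrier[OF P F i A B K b d Dc]
  have Nc: "N \<in> carrier_mat (1+nx+nx) (1+nx+nx)" unfolding N_def RPImat_def by (rule b3_carrier[OF Nc0])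
  have posN: "\<And>v. v \<in> carrier_vec (1+nx+nx) \<Longrightarrow> v \<noteq> 0\<^sub>v (1+nx+nx) \<Longrightarrow> v \<bullet> (N *\<^sub>v v) > 0"
    using rpi' Nc unfolding N_def[symmetric] by auto
  have posM: "X \<bullet> (M *\<^sub>v X) > 0" if Xc: "X \<in> carrier_vec (nu+m+mw+1+nx+nx)" and X0: "X \<noteq> 0\<^sub>v (nu+m+mw+1+nx+nx)" for X
  proof -
    have e: "nu+m+mw+1+nx+nx = nu+(m+(mw+(1+(nx+nx))))" by simp
    have Xc': "X \<in> carrier_vec (nu+(m+(mw+(1+(nx+nx)))))" using Xc unfolding e .
    obtain x1 x2 x3 y z1 z2 where xs: "x1 \<in> carrier_vec nu" "x2 \<in> carrier_vec m" "x3 \<in> carrier_vec mw"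
      "y \<in> carrier_vec 1" "z1 \<in> carrier_vec nx" "z2 \<in> carrier_vec nx" and XX: "X = x1 @\<^sub>v x2 @\<^sub>v x3 @\<^sub>v y @\<^sub>v z1 @\<^sub>v z2"
      using split6[OF Xc'] by blast
    define t where "t = y $ 0"
    define r where "r = row P i"
    define q where "q = transpose_mat B *\<^sub>v r"
    define k where "k = K *\<^sub>v z2"
    have r: "r \<in> carrier_vec nx" unfolding r_def using P i by auto
    have q: "q \<in> carrier_vec nu" and k: "k \<in> carrier_vec nu" unfolding q_def k_def using r B K xs by auto
    define l4 where "l4 = y \<bullet> (Lop (transpose_mat B * transpose_mat (row_mat P i)) (1\<^sub>m nu) (transpose_mat B * transpose_mat (row_mat P i)) (1\<^sub>m nu) *\<^sub>v y)"
    define l5 where "l5 = z1 \<bullet> (Lop F (minv W) F Wh *\<^sub>v z1)"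
    define l6 where "l6 = z2 \<bullet> (Lop P (minv D) P Dh *\<^sub>v z2)"
    define l7 where "l7 = z2 \<bullet> (Lop K (1\<^sub>m nu) K (1\<^sub>m nu) *\<^sub>v z2)"
    have QM: "X \<bullet> (M *\<^sub>v X) = x1 \<bullet> x1 - 2 * t * (x1 \<bullet> q) + 2 * (x1 \<bullet> k)
      + x2 \<bullet> (Dh *\<^sub>v x2) + 2 * t * (x2 \<bullet> b) + x3 \<bullet> (Wh *\<^sub>v x3) + 2 * t * (x3 \<bullet> d)
      + 2 * b $ i * t^2 + l4 + 2 * t * (r \<bullet> z1) + 2 * t * (r \<bullet> (A *\<^sub>v z2)) + l5 + l6 + l7"
      unfolding XX M_def t_def q_def k_def r_def l4_def l5_def l6_def l7_def
      by (rule LMI_quad[OF P F i A B K B K b d D W Dh(1) Wh(1) xs])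
    have QN: "(y @\<^sub>v z1 @\<^sub>v z2) \<bullet> (N *\<^sub>v (y @\<^sub>v z1 @\<^sub>v z2)) = 2 * b $ i * t^2 - t^2 * (b \<bullet> (D *\<^sub>v b)) - t^2 * (d \<bullet> (W *\<^sub>v d))
      + 2 * t * (r \<bullet> z1) + 2 * t * (r \<bullet> (A *\<^sub>v z2)) + 2 * t * (r \<bullet> (B *\<^sub>v k))
      + (F *\<^sub>v z1) \<bullet> (W *\<^sub>v (F *\<^sub>v z1)) + (P *\<^sub>v z2) \<bullet> (D *\<^sub>v (P *\<^sub>v z2))"
      unfolding N_def t_def r_def k_def
      by (rule RPI_quad[OF P F i A B K b d Dc xs(4-6)])
    have BPy: "(transpose_mat B * transpose_mat (row_mat P i)) *\<^sub>v y = t \<cdot>\<^sub>v q"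
      unfolding t_def q_def r_def using B P i xs by (simp add: row_mat_eq trow_mv)
    have q4: "l4 = t * t * (q \<bullet> q)"
    proof -
      have "l4 = ((transpose_mat B * transpose_mat (row_mat P i)) *\<^sub>v y) \<bullet> (1\<^sub>m nu *\<^sub>v ((transpose_mat B * transpose_mat (row_mat P i)) *\<^sub>v y))"
        unfolding l4_def
        by (rule Lop_eq[of _ nu 1 _ _ "1\<^sub>m nu"]) (use B P i xs minv_one in \<open>auto intro!: carrier_matI\<close>)
      then show ?thesis unfolding BPy using q by simp
    qed
    have q5: "l5 = (F *\<^sub>v z1) \<bullet> (W *\<^sub>v (F *\<^sub>v z1))"
      unfolding l5_def Wh_def
      by (rule Lop_eq[of _ mw nx]) (use F Dc Ws xs minv_diag_pos[OF W] in auto)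
    have q6: "l6 = (P *\<^sub>v z2) \<bullet> (D *\<^sub>v (P *\<^sub>v z2))"
      unfolding l6_def Dh_def
      by (rule Lop_eq[of _ m nx]) (use P Dc Ws xs minv_diag_pos[OF D] in auto)
    have q7: "l7 = k \<bullet> k"
    proof -
      have "l7 = k \<bullet> (1\<^sub>m nu *\<^sub>v k)"
        unfolding l7_def k_def
        by (rule Lop_eq[of _ nu nx]) (use K xs minv_one in auto)
      then show ?thesis using k by simp
    qed
    have rBk: "r \<bullet> (B *\<^sub>v k) = q \<bullet> k"
      unfolding q_def using trv_l[of k B r] sp_comm[of "B *\<^sub>v k" r] r k B by auto
    define w1 where "w1 = x1 - t \<cdot>\<^sub>v q + k"
    define w2 where "w2 = x2 + t \<cdot>\<^sub>v (D *\<^sub>v b)"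
    define w3 where "w3 = x3 + t \<cdot>\<^sub>v (W *\<^sub>v d)"
    have DhD: "Dh *\<^sub>v (D *\<^sub>v b) = b"
    proof -
      have "(Dh * D) *\<^sub>v b = b" unfolding Dh(3) using b by simp
      then show ?thesis using Dc Dh(2) b by simp
    qed
    have WhW: "Wh *\<^sub>v (W *\<^sub>v d) = d"
    proof -
      have "(Wh * W) *\<^sub>v d = d" unfolding Wh(3) using d by simp
      then show ?thesis using Dc Wh(2) d by simp
    qed
    have c1: "q \<bullet> x1 = x1 \<bullet> q" "k \<bullet> x1 = x1 \<bullet> k" "k \<bullet> q = q \<bullet> k"
      using sp_comm[of q x1] sp_comm[of k x1] sp_comm[of k q] q k xs by auto
    have f1: "w1 \<bullet> w1 = x1 \<bullet> x1 + t * t * (q \<bullet> q) + k \<bullet> k - 2 * t * (x1 \<bullet> q) + 2 * (x1 \<bullet> k) - 2 * t * (q \<bullet> k)"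
      unfolding w1_def using q k xs c1 by (simp add: algebra_simps)
    have c2: "(D *\<^sub>v b) \<bullet> (Dh *\<^sub>v x2) = x2 \<bullet> b" "(D *\<^sub>v b) \<bullet> b = b \<bullet> (D *\<^sub>v b)"
      using symv[of Dh "D *\<^sub>v b" x2] DhD Dh Dc b xs sp_comm[of "D *\<^sub>v b" b] by auto
    have c3: "(W *\<^sub>v d) \<bullet> (Wh *\<^sub>v x3) = x3 \<bullet> d" "(W *\<^sub>v d) \<bullet> d = d \<bullet> (W *\<^sub>v d)"
      using symv[of Wh "W *\<^sub>v d" x3] WhW Wh Dc d xs sp_comm[of "W *\<^sub>v d" d] by auto
    have f2: "w2 \<bullet> (Dh *\<^sub>v w2) = x2 \<bullet> (Dh *\<^sub>v x2) + 2 * t * (x2 \<bullet> b) + t * t * (b \<bullet> (D *\<^sub>v b))"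
      unfolding w2_def using Dh Dc b xs DhD c2 by (simp add: algebra_simps)
    have f3: "w3 \<bullet> (Wh *\<^sub>v w3) = x3 \<bullet> (Wh *\<^sub>v x3) + 2 * t * (x3 \<bullet> d) + t * t * (d \<bullet> (W *\<^sub>v d))"
      unfolding w3_def using Wh Dc d xs WhW c3 by (simp add: algebra_simps)
    have ID: "X \<bullet> (M *\<^sub>v X) = (y @\<^sub>v z1 @\<^sub>v z2) \<bullet> (N *\<^sub>v (y @\<^sub>v z1 @\<^sub>v z2)) + w1 \<bullet> w1 + w2 \<bullet> (Dh *\<^sub>v w2) + w3 \<bullet> (Wh *\<^sub>v w3)"
      unfolding QM QN f1 f2 f3 q4 q5 q6 q7 rBk by (simp add: algebra_simps power2_eq_square)
    have n1: "w1 \<bullet> w1 \<ge> 0" by (rule sp_self_nonneg)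
    have n2: "w2 \<bullet> (Dh *\<^sub>v w2) \<ge> 0" by (rule diag_pos_quad(1)[OF Dh(1)]) (use xs Dc b in \<open>simp add: w2_def\<close>)
    have n3: "w3 \<bullet> (Wh *\<^sub>v w3) \<ge> 0" by (rule diag_pos_quad(1)[OF Wh(1)]) (use xs Dc d in \<open>simp add: w3_def\<close>)
    have s: "y @\<^sub>v z1 @\<^sub>v z2 \<in> carrier_vec (1+(nx+nx))" using xs by (intro append_carrier_vec)
    show ?thesis
    proof (cases "y @\<^sub>v z1 @\<^sub>v z2 = 0\<^sub>v (1+(nx+nx))")
      case False
      have "(y @\<^sub>v z1 @\<^sub>v z2) \<bullet> (N *\<^sub>v (y @\<^sub>v z1 @\<^sub>v z2)) > 0"
        by (rule posN) (use s False in \<open>simp_all add: add.assoc\<close>)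
      then show ?thesis unfolding ID using n1 n2 n3 by linarith
    next
      case True
      then have z: "y = 0\<^sub>v 1" "z1 = 0\<^sub>v nx" "z2 = 0\<^sub>v nx"
        using app0[OF xs(4) append_carrier_vec[OF xs(5,6)]] app0[OF xs(5,6)] by auto
      have t0: "t = 0" unfolding t_def z by simp
      have k0: "k = 0\<^sub>v nu" unfolding k_def z using K by simp
      have QN0: "(y @\<^sub>v z1 @\<^sub>v z2) \<bullet> (N *\<^sub>v (y @\<^sub>v z1 @\<^sub>v z2)) = 0"
        unfolding QN t0 using z F P Dc by simp
      have x0: "x1 \<noteq> 0\<^sub>v nu \<or> x2 \<noteq> 0\<^sub>v m \<or> x3 \<noteq> 0\<^sub>v mw"
      proof (rule ccontr)
        assume "\<not> ?thesis"
        then have "X = 0\<^sub>v (nu+(m+(mw+(1+(nx+nx)))))" unfolding XX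
          using True zero_app[of nu "m+(mw+(1+(nx+nx)))"] zero_app[of m "mw+(1+(nx+nx))"] zero_app[of mw "1+(nx+nx)"]
          by simp
        then show False using X0 unfolding e by simp
      qed
      have g1: "w1 \<bullet> w1 = x1 \<bullet> x1" unfolding f1 t0 k0 using xs by simp
      have g2: "w2 \<bullet> (Dh *\<^sub>v w2) = x2 \<bullet> (Dh *\<^sub>v x2)" unfolding f2 t0 by simp
      have g3: "w3 \<bullet> (Wh *\<^sub>v w3) = x3 \<bullet> (Wh *\<^sub>v x3)" unfolding f3 t0 by simp
      have "x1 \<bullet> x1 + x2 \<bullet> (Dh *\<^sub>v x2) + x3 \<bullet> (Wh *\<^sub>v x3) > 0"
        using x0 sp_self_pos[OF xs(1)] diag_pos_quad[OF Dh(1) xs(2)] diag_pos_quad[OF Wh(1) xs(3)] sp_self_nonneg[of x1]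
        by fastforce
      then show ?thesis unfolding ID QN0 g1 g2 g3 by simp
    qed
  qed
  show ?thesis unfolding LMI_eq pos_def_def Dh_def[symmetric] Wh_def[symmetric] M_def[symmetric]
    using Mc Msym posM by auto
qed


theorem theorem3:
  fixes nx nu m mw i :: nat
    and P F A B K D W :: "real mat" and b d :: "real vec"
  assumes P: "P \<in> carrier_mat m nx" and F: "F \<in> carrier_mat mw nx"
    and i: "i < m"
    and A: "A \<in> carrier_mat nx nx" and B: "B \<in> carrier_mat nx nu"
    and K: "K \<in> carrier_mat nu nx"
    and b: "b \<in> carrier_vec m" and d: "d \<in> carrier_vec mw"
    and D: "D \<in> diag_pos m" and W: "W \<in> diag_pos mw"
    and rpi: "RPI nx P F i A B K b d D W"
  shows "LMI nx nu m mw P F i B K D W A B d K b (minv D) (minv W)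
       \<and> (\<forall>Ab Bb Kb bb db Dh Wh.
            Ab \<in> carrier_mat nx nx \<longrightarrow> Bb \<in> carrier_mat nx nu \<longrightarrow> Kb \<in> carrier_mat nu nx \<longrightarrow>
            bb \<in> carrier_vec m \<longrightarrow> db \<in> carrier_vec mw \<longrightarrow>
            Dh \<in> diag_pos m \<longrightarrow> Wh \<in> diag_pos mw \<longrightarrow>
            LMI nx nu m mw P F i B K D W Ab Bb db Kb bb Dh Wh \<longrightarrow>
            RPI nx P F i Ab Bb Kb bb db (minv Dh) (minv Wh))"
  proof
  show "LMI nx nu m mw P F i B K D W A B d K b (minv D) (minv W)"
    by (rule part_a[OF P F i A B K b d D W rpi])
next
  show "\<forall>Ab Bb Kb bb db Dh Wh.
            Ab \<in> carrier_mat nx nx \<longrightarrow> Bb \<in> carrier_mat nx nu \<longrightarrow> Kb \<in> carrier_mat nu nx \<longrightarrow>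
            bb \<in> carrier_vec m \<longrightarrow> db \<in> carrier_vec mw \<longrightarrow>
            Dh \<in> diag_pos m \<longrightarrow> Wh \<in> diag_pos mw \<longrightarrow>
            LMI nx nu m mw P F i B K D W Ab Bb db Kb bb Dh Wh \<longrightarrow>
            RPI nx P F i Ab Bb Kb bb db (minv Dh) (minv Wh)"
    using part_b[OF P F i _ _ _ B K _ _ D W] by blast
qed

end
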